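(* Let $A=\bar A\times\bar B$ be a finite left brace of odd order with cyclic additive group and Z-group multiplicative group, with the notation of the context. Let $(a,b,c)$ and $(a',b',c')$ be elements of $A$ (with $a=(a_1,\dots,a_v)\in\bar A$, $b,b'\in B_{m+1}\times\dots\times B_r$, $c=(c_1,\dots,c_m)\in B_1\times\dots\times B_m$, and similarly for $a',c'$) each belonging to some transitive cycle base, and let $X_1$ (resp. $X_2$) be the uniconnected associated cycle set of $A$ built from $(a,b,c)$ (resp. $(a',b',c')$). Then $X_1\cong X_2$ if and only if (1) for every $j\in\{1,\dots,v\}$, $a'_j=(1+s_j)(1+q_j^{d_j}a''_j)a_j$ for some $s_j\in\mathrm{Soc}(A_j)$ and $a''_j\in A_j$; and (2) for every $j\in\{1,\dots,m\}$, $c'_j=(1+s_j)(1+p_j^{f_j}a''_j)c_j$ for some $s_j\in I_j$ and $a''_j\in B_j$, where the products are ring multiplications in $\mathbb{Z}/q_j^{\gamma_j}\mathbb{Z}$, resp. $\mathbb{Z}/p_j^{\beta_j}\mathbb{Z}$.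
   Context: A left brace is a set $A$ with $(A,+)$ abelian group, $(A,\circ)$ group, $a\circ(b+c)=a\circ b-a+a\circ c$; $\lambda_a(b):=-a+a\circ b$, $\mathrm{Soc}(A)=\{a\mid\lambda_a=\mathrm{id}\}$. A trivial left brace has $a\circ b=a+b$. A Z-group is a finite group with all Sylow subgroups cyclic. A transitive cycle base is a single orbit of the action $\lambda$ of $(A,\circ)$ generating $(A,+)$; the uniconnected associated cycle set built from $g$ is $(A,\bullet)$, $x\bullet y:=\lambda_x(g)^{-}\circ y$. Decomposition: integers $v,m,r\ge0$, $m\le r$; distinct odd primes $q_1,\dots,q_v,p_1,\dots,p_r$, $p_1<\dots<p_r$; left braces $A_i$, $B_j$ with cyclic additive groups, $|A_i|=q_i^{\gamma_i}$, $|B_j|=p_j^{\beta_j}$, $B_{m+1},\dots,B_r$ trivial; each such prime-power brace is identified with a brace on $\mathbb{Z}/p^k\mathbb{Z}$ (usual addition) with $x\circ y=x+y+p^t xy$ for some $1\le t\le k$, so ring multiplication is available. $\alpha:(B_1\times\dots\times B_m,\circ)\to\mathrm{Aut}(B_{m+1}\times\dots\times B_r,+)$ is a homomorphism nontrivial on each $B_i$ ($i\le m$) whose image acts nontrivially on each $B_i$ ($i>m$); $A=\bar A\times\bar B$ with $\bar A=A_1\times\dots\times A_v$ and $\bar B=(B_{m+1}\times\dots\times B_r)\rtimes_\alpha(B_1\times\dots\times B_m)$ (additive group direct product, $(x,y)\circ(x',y')=(x\circ\alpha(y)(x'),y\circ y')$). $|\mathrm{Soc}(A_i)|=q_i^{d_i}$,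 $|\mathrm{Soc}(B_j)|=p_j^{f_j}$, $I_j:=\mathrm{Soc}(B_j)\cap\ker\alpha$ ($j\le m$). *)

theory Defs
  imports "HOL-Computational_Algebra.Primes"
begin

definition lam :: "('e \<Rightarrow> 'e \<Rightarrow> 'e) \<Rightarrow> ('e \<Rightarrow> 'e) \<Rightarrow> ('e \<Rightarrow> 'e \<Rightarrow> 'e) \<Rightarrow> 'e \<Rightarrow> 'e \<Rightarrow> 'e" where
  "lam add neg circ x y = add (neg x) (circ x y)"

definition circ_inv :: "'e set \<Rightarrow> ('e \<Rightarrow> 'e \<Rightarrow> 'e) \<Rightarrow> 'e \<Rightarrow> 'e \<Rightarrow> 'e" where
  "circ_inv Car circ zero x = (THE y. y \<in> Car \<and> circ x y = zero)"

inductive_set add_gen :: "('e \<Rightarrow> 'e \<Rightarrow> 'e) \<Rightarrow> ('e \<Rightarrow> 'e) \<Rightarrow> 'e \<Rightarrow> 'e set \<Rightarrow> 'e set"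
  for add neg zero S where
  zero: "zero \<in> add_gen add neg zero S"
| base: "s \<in> S \<Longrightarrow> s \<in> add_gen add neg zero S"
| plus: "x \<in> add_gen add neg zero S \<Longrightarrow> y \<in> add_gen add neg zero S \<Longrightarrow> add x y \<in> add_gen add neg zero S"
| uminus: "x \<in> add_gen add neg zero S \<Longrightarrow> neg x \<in> add_gen add neg zero S"

definition lam_orbit :: "'e set \<Rightarrow> ('e \<Rightarrow> 'e \<Rightarrow> 'e) \<Rightarrow> ('e \<Rightarrow> 'e) \<Rightarrow> ('e \<Rightarrow> 'e \<Rightarrow> 'e) \<Rightarrow> 'e \<Rightarrow> 'e set" where
  "lam_orbit Car add neg circ h = {lam add neg circ x h | x. x \<in> Car}"

definition transitive_cycle_base ::
  "'e set \<Rightarrow> ('e \<Rightarrow> 'e \<Rightarrow> 'e) \<Rightarrow> ('e \<Rightarrow> 'e) \<Rightarrow> 'e \<Rightarrow> ('e \<Rightarrow> 'e \<Rightarrow> 'e) \<Rightarrow> 'e set \<Rightarrow> bool" where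
  "transitive_cycle_base Car add neg zero circ T \<longleftrightarrow>
     (\<exists>h\<in>Car. T = lam_orbit Car add neg circ h) \<and> add_gen add neg zero T = Car"

definition uc_cycle_op ::
  "'e set \<Rightarrow> ('e \<Rightarrow> 'e \<Rightarrow> 'e) \<Rightarrow> ('e \<Rightarrow> 'e) \<Rightarrow> 'e \<Rightarrow> ('e \<Rightarrow> 'e \<Rightarrow> 'e) \<Rightarrow> 'e \<Rightarrow> 'e \<Rightarrow> 'e \<Rightarrow> 'e" where
  "uc_cycle_op Car add neg zero circ g x y =
     circ (circ_inv Car circ zero (lam add neg circ x g)) y"

definition cycle_set_iso :: "'e set \<Rightarrow> ('e \<Rightarrow> 'e \<Rightarrow> 'e) \<Rightarrow> ('e \<Rightarrow> 'e \<Rightarrow> 'e) \<Rightarrow> bool" where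
  "cycle_set_iso Car op1 op2 \<longleftrightarrow>
     (\<exists>f. bij_betw f Car Car \<and> (\<forall>x\<in>Car. \<forall>y\<in>Car. f (op1 x y) = op2 (f x) (f y)))"

definition tup_car :: "nat set \<Rightarrow> (nat \<Rightarrow> nat) \<Rightarrow> (nat \<Rightarrow> int) set" where
  "tup_car I N = {x. (\<forall>i\<in>I. 0 \<le> x i \<and> x i < int (N i)) \<and> (\<forall>i. i \<notin> I \<longrightarrow> x i = 0)}"

definition tup_add :: "nat set \<Rightarrow> (nat \<Rightarrow> nat) \<Rightarrow> (nat \<Rightarrow> int) \<Rightarrow> (nat \<Rightarrow> int) \<Rightarrow> (nat \<Rightarrow> int)" where
  "tup_add I N x y = (\<lambda>i. if i \<in> I then (x i + y i) mod int (N i) else 0)"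

definition tup_neg :: "nat set \<Rightarrow> (nat \<Rightarrow> nat) \<Rightarrow> (nat \<Rightarrow> int) \<Rightarrow> (nat \<Rightarrow> int)" where
  "tup_neg I N x = (\<lambda>i. if i \<in> I then (- x i) mod int (N i) else 0)"

text \<open>Componentwise brace x \<circ> y = x + y + E_i x y on Z/N_i Z (E_i = p_i^t_i).\<close>
definition tup_circ :: "nat set \<Rightarrow> (nat \<Rightarrow> nat) \<Rightarrow> (nat \<Rightarrow> nat) \<Rightarrow> (nat \<Rightarrow> int) \<Rightarrow> (nat \<Rightarrow> int) \<Rightarrow> (nat \<Rightarrow> int)" where
  "tup_circ I N E x y = (\<lambda>i. if i \<in> I then (x i + y i + int (E i) * x i * y i) mod int (N i) else 0)"

definition emb :: "nat \<Rightarrow> int \<Rightarrow> (nat \<Rightarrow> int)" where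
  "emb j s = (\<lambda>i. if i = j then s else 0)"

definition soc1 :: "nat \<Rightarrow> nat \<Rightarrow> int set" where
  "soc1 N E = {x \<in> {0..<int N}. \<forall>y\<in>{0..<int N}. (- x + (x + y + int E * x * y)) mod int N = y}"

definition add_aut :: "nat set \<Rightarrow> (nat \<Rightarrow> nat) \<Rightarrow> ((nat \<Rightarrow> int) \<Rightarrow> (nat \<Rightarrow> int)) \<Rightarrow> bool" where
  "add_aut I N \<phi> \<longleftrightarrow> bij_betw \<phi> (tup_car I N) (tup_car I N) \<and>
     (\<forall>x\<in>tup_car I N. \<forall>y\<in>tup_car I N. \<phi> (tup_add I N x y) = tup_add I N (\<phi> x) (\<phi> y))"

text \<open>NA i = q_i^gamma_i, EA i = q_i^(t of A_i), NB j = p_j^beta_j, EB j = p_j^(t of B_j).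
  The braces B_{m+1},...,B_r are trivial, so their multiplication is addition.\<close>

type_synonym belt = "(nat \<Rightarrow> int) \<times> (nat \<Rightarrow> int) \<times> (nat \<Rightarrow> int)"

definition br_car :: "nat \<Rightarrow> nat \<Rightarrow> nat \<Rightarrow> (nat \<Rightarrow> nat) \<Rightarrow> (nat \<Rightarrow> nat) \<Rightarrow> belt set" where
  "br_car v m r NA NB = tup_car {1..v} NA \<times> tup_car {m+1..r} NB \<times> tup_car {1..m} NB"

definition br_zero :: belt where
  "br_zero = (\<lambda>_. 0, \<lambda>_. 0, \<lambda>_. 0)"

definition br_add :: "nat \<Rightarrow> nat \<Rightarrow> nat \<Rightarrow> (nat \<Rightarrow> nat) \<Rightarrow> (nat \<Rightarrow> nat) \<Rightarrow> belt \<Rightarrow> belt \<Rightarrow> belt" where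
  "br_add v m r NA NB = (\<lambda>(a,b,c) (a',b',c').
     (tup_add {1..v} NA a a', tup_add {m+1..r} NB b b', tup_add {1..m} NB c c'))"

definition br_neg :: "nat \<Rightarrow> nat \<Rightarrow> nat \<Rightarrow> (nat \<Rightarrow> nat) \<Rightarrow> (nat \<Rightarrow> nat) \<Rightarrow> belt \<Rightarrow> belt" where
  "br_neg v m r NA NB = (\<lambda>(a,b,c).
     (tup_neg {1..v} NA a, tup_neg {m+1..r} NB b, tup_neg {1..m} NB c))"

definition br_circ :: "nat \<Rightarrow> nat \<Rightarrow> nat \<Rightarrow> (nat \<Rightarrow> nat) \<Rightarrow> (nat \<Rightarrow> nat) \<Rightarrow> (nat \<Rightarrow> nat) \<Rightarrow> (nat \<Rightarrow> nat)
     \<Rightarrow> ((nat \<Rightarrow> int) \<Rightarrow> (nat \<Rightarrow> int) \<Rightarrow> (nat \<Rightarrow> int)) \<Rightarrow> belt \<Rightarrow> belt \<Rightarrow> belt" where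
  "br_circ v m r NA EA NB EB \<alpha> = (\<lambda>(a,b,c) (a',b',c').
     (tup_circ {1..v} NA EA a a', tup_add {m+1..r} NB b (\<alpha> c b'), tup_circ {1..m} NB EB c c'))"

end

theory Submission
  imports Defs "HOL-Number_Theory.Cong"
begin

definition gcar :: "'i set \<Rightarrow> ('i \<Rightarrow> nat) \<Rightarrow> ('i \<Rightarrow> int) set" where
  "gcar I N = {x. (\<forall>i\<in>I. 0 \<le> x i \<and> x i < int (N i)) \<and> (\<forall>i. i \<notin> I \<longrightarrow> x i = 0)}"
definition gadd :: "'i set \<Rightarrow> ('i \<Rightarrow> nat) \<Rightarrow> ('i \<Rightarrow> int) \<Rightarrow> ('i \<Rightarrow> int) \<Rightarrow> ('i \<Rightarrow> int)" where
  "gadd I N x y = (\<lambda>i. if i \<in> I then (x i + y i) mod int (N i) else 0)"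

lemma tup_car_gcar: "tup_car = gcar" unfolding tup_car_def[abs_def] gcar_def[abs_def] ..
lemma tup_add_gadd: "tup_add = gadd" unfolding tup_add_def[abs_def] gadd_def[abs_def] ..

lemma gcarD: "x \<in> gcar I N \<Longrightarrow> i \<in> I \<Longrightarrow> 0 \<le> x i \<and> x i < int (N i)"
  "x \<in> gcar I N \<Longrightarrow> i \<notin> I \<Longrightarrow> x i = 0"
  by (auto simp: gcar_def)

lemma gcar_mod: "x \<in> gcar I N \<Longrightarrow> i \<in> I \<Longrightarrow> x i mod int (N i) = x i"
  by (simp add: gcarD)

lemma gadd_cl: "(\<forall>i\<in>I. N i > 0) \<Longrightarrow> gadd I N x y \<in> gcar I N"
  by (auto simp: gcar_def gadd_def)

lemma gsmul: assumes "\<forall>i\<in>I. N i > 0" "x \<in> gcar I N"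
  shows "(gadd I N x ^^ n) (\<lambda>_. 0) = (\<lambda>i. if i \<in> I then (int n * x i) mod int (N i) else 0)"
proof (induction n)
  case 0 then show ?case by auto
next
  case (Suc n)
  show ?case using Suc by (auto simp: gadd_def mod_simps algebra_simps)
qed

lemma aa_mod: "0 \<le> (a::int) \<Longrightarrow> a < N \<Longrightarrow> a = (a + a) mod N \<Longrightarrow> a = 0"
proof -
  assume h: "0 \<le> a" "a < N" "a = (a + a) mod N"
  show "a = 0"
  proof (cases "a + a < N")
    case True then show ?thesis using h by simp
  next
    case False
    have "(a + a) mod N = ((a + a - N) + N) mod N" by simp
    also have "\<dots> = (a + a - N) mod N" by (simp only: mod_add_self2)
    also have "\<dots> = a + a - N" using h False by (intro mod_pos_pos_trivial) auto
    finally have "(a + a) mod N = a + a - N" .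
    then show ?thesis using h by simp
  qed
qed

lemma gcoord:
  fixes I :: "'i set" and N :: "'i \<Rightarrow> nat"
  assumes fin: "finite I" and N1: "\<forall>i\<in>I. N i > 1"
    and cop: "\<forall>i\<in>I. \<forall>k\<in>I. i \<noteq> k \<longrightarrow> coprime (N i) (N k)"
    and cl: "\<forall>x\<in>gcar I N. \<phi> x \<in> gcar I N"
    and hom: "\<forall>x\<in>gcar I N. \<forall>y\<in>gcar I N. \<phi> (gadd I N x y) = gadd I N (\<phi> x) (\<phi> y)"
    and x: "x \<in> gcar I N" and i: "i \<in> I"
  shows "\<phi> x i = (\<phi> (\<lambda>k. if k = i then 1 else 0) i * x i) mod int (N i)"
proof -
  have N0: "\<forall>i\<in>I. N i > 0" using N1 by auto
  define sm where "sm n y = (gadd I N y ^^ n) (\<lambda>_. 0)" for n y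
  have z: "(\<lambda>_. 0) \<in> gcar I N" by (auto simp: gcar_def N0)
  have smcar: "sm n y \<in> gcar I N" if "y \<in> gcar I N" for n y
    using that z by (cases n) (auto simp: sm_def gadd_cl N0)
  have phz: "\<phi> (\<lambda>_. 0) = (\<lambda>_. 0)"
  proof -
    have "gadd I N (\<lambda>_. 0) (\<lambda>_. 0) = (\<lambda>_. (0::int))" by (auto simp: gadd_def)
    then have "\<phi> (\<lambda>_. 0) = gadd I N (\<phi> (\<lambda>_. 0)) (\<phi> (\<lambda>_. 0))" using hom z by metis
    then have "\<phi> (\<lambda>_. 0) k = 0" for k
    proof (cases "k \<in> I")
      case True
      assume "\<phi> (\<lambda>_. 0) = gadd I N (\<phi> (\<lambda>_. 0)) (\<phi> (\<lambda>_. 0))"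
      then have "\<phi> (\<lambda>_. 0) k = (\<phi> (\<lambda>_. 0) k + \<phi> (\<lambda>_. 0) k) mod int (N k)"
        using True by (metis gadd_def)
      moreover have "0 \<le> \<phi> (\<lambda>_. 0) k \<and> \<phi> (\<lambda>_. 0) k < int (N k)"
        using gcarD(1)[OF cl[rule_format, OF z] True] .
      ultimately show ?thesis using aa_mod by blast
    next
      case False then show ?thesis using gcarD(2)[OF cl[rule_format, OF z] False] by simp
    qed
    then show ?thesis by auto
  qed
  have phsm: "\<phi> (sm n y) = sm n (\<phi> y)" if "y \<in> gcar I N" for n y
  proof (induction n)
    case 0 then show ?case by (simp add: sm_def phz)
  next
    case (Suc n)
    have "\<phi> (sm (Suc n) y) = \<phi> (gadd I N y (sm n y))" by (simp add: sm_def)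
    also have "\<dots> = gadd I N (\<phi> y) (\<phi> (sm n y))" using hom that smcar by blast
    finally show ?case using Suc by (simp add: sm_def)
  qed
  define e where "e = (\<lambda>k. if k = i then 1 else (0::int))"
  have e: "e \<in> gcar I N" using N1 i by (auto simp: gcar_def e_def)
  define r where "r = (\<lambda>k. if k = i then 0 else x k)"
  have r: "r \<in> gcar I N" using x by (auto simp: gcar_def r_def)
  have xi: "0 \<le> x i" using gcarD(1)[OF x i] by auto
  have sme: "sm (nat (x i)) e = (\<lambda>k. if k \<in> I then int (nat (x i)) * e k mod int (N k) else 0)"
    by (simp add: sm_def gsmul[OF N0 e])
  have xdec: "x = gadd I N (sm (nat (x i)) e) r"
    unfolding sme using x xi i
    by (auto simp: gadd_def e_def r_def fun_eq_iff gcarD gcar_mod)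
  define M where "M = (\<Prod>k\<in>I - {i}. N k)"
  have Mr: "sm M r = (\<lambda>_. 0)"
  proof -
    have "int M * r k mod int (N k) = 0" if "k \<in> I" for k
    proof (cases "k = i")
      case True then show ?thesis by (simp add: r_def)
    next
      case False
      have "N k dvd M" unfolding M_def using fin that False by (intro dvd_prodI) auto
      then show ?thesis by simp
    qed
    then show ?thesis unfolding sm_def by (auto simp: gsmul[OF N0 r] fun_eq_iff)
  qed
  have "\<phi> r i = 0"
  proof -
    have "sm M (\<phi> r) = (\<lambda>_. 0)" using phsm[OF r, of M] Mr phz by simp
    then have "int M * \<phi> r i mod int (N i) = 0"
      unfolding sm_def using gsmul[OF N0 cl[rule_format, OF r]] i by (metis)
    then have d: "int (N i) dvd int M * \<phi> r i" by auto
    have "coprime M (N i)" unfolding M_def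
      by (rule prod_coprime_left) (use cop i in auto)
    then have "coprime (int (N i)) (int M)" by (simp add: coprime_commute)
    then have "int (N i) dvd \<phi> r i" using d by (simp add: coprime_dvd_mult_right_iff)
    moreover have "0 \<le> \<phi> r i" "\<phi> r i < int (N i)" using gcarD(1)[OF cl[rule_format, OF r] i] by auto
    ultimately show ?thesis by (metis zdvd_imp_le dvd_imp_le_int le_less not_less zdvd_not_zless)
  qed
  have "\<phi> x = gadd I N (\<phi> (sm (nat (x i)) e)) (\<phi> r)"
    using xdec hom smcar[OF e] r by metis
  then have "\<phi> x i = (\<phi> (sm (nat (x i)) e) i + \<phi> r i) mod int (N i)" using i by (simp add: gadd_def)
  also have "\<dots> = (\<phi> e i * x i) mod int (N i)"
    using phsm[OF e] \<open>\<phi> r i = 0\<close> i xi unfolding sm_def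
    by (simp add: gsmul[OF N0 cl[rule_format, OF e]] mod_simps algebra_simps)
  finally show ?thesis by (simp add: e_def)
qed

inductive_set cgen :: "('e \<Rightarrow> 'e \<Rightarrow> 'e) \<Rightarrow> 'e \<Rightarrow> 'e set \<Rightarrow> 'e set" for circ zr S where
  zr: "zr \<in> cgen circ zr S"
| base: "s \<in> S \<Longrightarrow> s \<in> cgen circ zr S"
| mul: "x \<in> cgen circ zr S \<Longrightarrow> y \<in> cgen circ zr S \<Longrightarrow> circ x y \<in> cgen circ zr S"

inductive_set addc :: "('e \<Rightarrow> 'e \<Rightarrow> 'e) \<Rightarrow> 'e \<Rightarrow> 'e set \<Rightarrow> 'e set" for add zr S where
  zr: "zr \<in> addc add zr S"
| base: "s \<in> S \<Longrightarrow> s \<in> addc add zr S"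
| plus: "x \<in> addc add zr S \<Longrightarrow> y \<in> addc add zr S \<Longrightarrow> add x y \<in> addc add zr S"

locale brace =
  fixes C :: "'e set" and add :: "'e \<Rightarrow> 'e \<Rightarrow> 'e" and neg :: "'e \<Rightarrow> 'e" and zr :: 'e
    and circ :: "'e \<Rightarrow> 'e \<Rightarrow> 'e"
  assumes add_cl: "x \<in> C \<Longrightarrow> y \<in> C \<Longrightarrow> add x y \<in> C"
    and neg_cl: "x \<in> C \<Longrightarrow> neg x \<in> C"
    and zr_cl: "zr \<in> C"
    and add_assoc: "x \<in> C \<Longrightarrow> y \<in> C \<Longrightarrow> w \<in> C \<Longrightarrow> add (add x y) w = add x (add y w)"
    and add_comm: "x \<in> C \<Longrightarrow> y \<in> C \<Longrightarrow> add x y = add y x"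
    and add_zr: "x \<in> C \<Longrightarrow> add x zr = x"
    and add_neg: "x \<in> C \<Longrightarrow> add x (neg x) = zr"
    and circ_cl: "x \<in> C \<Longrightarrow> y \<in> C \<Longrightarrow> circ x y \<in> C"
    and circ_assoc: "x \<in> C \<Longrightarrow> y \<in> C \<Longrightarrow> w \<in> C \<Longrightarrow> circ (circ x y) w = circ x (circ y w)"
    and circ_zr: "x \<in> C \<Longrightarrow> circ x zr = x"
    and zr_circ: "x \<in> C \<Longrightarrow> circ zr x = x"
    and circ_inv_ex: "x \<in> C \<Longrightarrow> \<exists>y\<in>C. circ x y = zr \<and> circ y x = zr"
    and brace_law: "a \<in> C \<Longrightarrow> b \<in> C \<Longrightarrow> c \<in> C \<Longrightarrow>
        circ a (add b c) = add (add (circ a b) (neg a)) (circ a c)"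
    and neg_pow: "\<exists>K. \<forall>x\<in>C. neg x = (add x ^^ K) zr"
begin

abbreviation "lm \<equiv> lam add neg circ"
abbreviation "ci \<equiv> circ_inv C circ zr"
abbreviation "cop \<equiv> uc_cycle_op C add neg zr circ"

definition aut :: "('e \<Rightarrow> 'e) \<Rightarrow> bool" where
  "aut \<phi> \<longleftrightarrow> bij_betw \<phi> C C \<and> (\<forall>x\<in>C. \<forall>y\<in>C. \<phi> (add x y) = add (\<phi> x) (\<phi> y))
     \<and> (\<forall>x\<in>C. \<forall>y\<in>C. \<phi> (circ x y) = circ (\<phi> x) (\<phi> y))"

lemma zr_add: "x \<in> C \<Longrightarrow> add zr x = x"
  using add_comm add_zr zr_cl by metis

lemma neg_add: "x \<in> C \<Longrightarrow> add (neg x) x = zr"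
  using add_comm add_neg neg_cl by metis

lemma add_cancel: assumes "a \<in> C" "b \<in> C" "c \<in> C" "add a b = add a c" shows "b = c"
proof -
  have "add (neg a) (add a b) = add (neg a) (add a c)" using assms by simp
  then show ?thesis using assms add_assoc[of "neg a" a] neg_cl neg_add zr_add by metis
qed

lemma neg_unique: assumes "a \<in> C" "b \<in> C" "add a b = zr" shows "b = neg a"
  using add_cancel[of a b "neg a"] assms add_neg neg_cl by metis

lemma neg_zr: "neg zr = zr"
  using neg_unique[of zr zr] zr_cl add_zr by metis

lemma ci_ex: assumes "x \<in> C" shows "ci x \<in> C \<and> circ x (ci x) = zr \<and> circ (ci x) x = zr"
proof -
  obtain y where y: "y \<in> C" "circ x y = zr" "circ y x = zr" using circ_inv_ex[OF assms] by blast
  have uq: "y' = y" if "y' \<in> C" "circ x y' = zr" for y'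
  proof -
    have "y' = circ (circ y x) y'" using y that zr_circ by simp
    also have "\<dots> = circ y (circ x y')" using circ_assoc y that assms by blast
    also have "\<dots> = y" using that y circ_zr by simp
    finally show ?thesis .
  qed
  have "ci x = y" unfolding circ_inv_def
  proof (rule the_equality)
    show "y \<in> C \<and> circ x y = zr" using y by simp
    show "\<And>y'. y' \<in> C \<and> circ x y' = zr \<Longrightarrow> y' = y" using uq by blast
  qed
  then show ?thesis using y by simp
qed

lemma ci_cl: "x \<in> C \<Longrightarrow> ci x \<in> C" using ci_ex by blast
lemma circ_ci: "x \<in> C \<Longrightarrow> circ x (ci x) = zr" using ci_ex by blast
lemma ci_circ: "x \<in> C \<Longrightarrow> circ (ci x) x = zr" using ci_ex by blast

lemma circ_cancel: assumes "a \<in> C" "b \<in> C" "c \<in> C" "circ a b = circ a c" shows "b = c"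
proof -
  have "circ (ci a) (circ a b) = circ (ci a) (circ a c)" using assms by simp
  then show ?thesis using assms circ_assoc[of "ci a" a] ci_cl ci_circ zr_circ by metis
qed

lemma circ_cancel_r: assumes "a \<in> C" "b \<in> C" "c \<in> C" "circ b a = circ c a" shows "b = c"
proof -
  have "circ (circ b a) (ci a) = circ (circ c a) (ci a)" using assms by simp
  then show ?thesis using assms circ_assoc[of _ a "ci a"] ci_cl circ_ci circ_zr by metis
qed

lemma ci_unique: assumes "x \<in> C" "y \<in> C" "circ x y = zr" shows "y = ci x"
  using circ_cancel[of x y "ci x"] assms ci_cl circ_ci by metis

lemma ci_ci: "x \<in> C \<Longrightarrow> ci (ci x) = x"
  using ci_unique[of "ci x" x] ci_cl ci_circ by metis

lemma ci_zr: "ci zr = zr"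
  using ci_unique[of zr zr] zr_cl circ_zr by metis

lemma lm_cl: "a \<in> C \<Longrightarrow> b \<in> C \<Longrightarrow> lm a b \<in> C"
  unfolding lam_def by (simp add: add_cl neg_cl circ_cl)

lemma circ_lm: assumes "a \<in> C" "b \<in> C" shows "circ a b = add a (lm a b)"
proof -
  have "add a (lm a b) = add (add a (neg a)) (circ a b)"
    unfolding lam_def using assms add_assoc neg_cl circ_cl by simp
  then show ?thesis using assms add_neg zr_add circ_cl by simp
qed

lemma lm_add: assumes "a \<in> C" "b \<in> C" "c \<in> C"
  shows "lm a (add b c) = add (lm a b) (lm a c)"
proof -
  have n: "neg a \<in> C" and ab: "circ a b \<in> C" and ac: "circ a c \<in> C"
    using assms neg_cl circ_cl by auto
  have "lm a (add b c) = add (neg a) (add (add (circ a b) (neg a)) (circ a c))"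
    unfolding lam_def using brace_law assms by simp
  also have "\<dots> = add (add (neg a) (circ a b)) (add (neg a) (circ a c))"
    using n ab ac add_assoc add_comm add_cl by metis
  finally show ?thesis unfolding lam_def .
qed

lemma lm_zr: assumes "a \<in> C" shows "lm a zr = zr"
proof -
  have "add (lm a zr) zr = add (lm a zr) (lm a zr)"
    using lm_add[OF assms zr_cl zr_cl] add_zr zr_cl lm_cl assms by simp
  then show ?thesis using add_cancel lm_cl assms zr_cl by metis
qed

lemma lm_neg: assumes "a \<in> C" "b \<in> C" shows "lm a (neg b) = neg (lm a b)"
proof -
  have "add (lm a b) (lm a (neg b)) = zr"
    using lm_add[OF assms(1,2) neg_cl[OF assms(2)]] add_neg assms lm_zr by simp
  then show ?thesis using neg_unique lm_cl assms neg_cl by metis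
qed

lemma zr_lm: "b \<in> C \<Longrightarrow> lm zr b = b"
  unfolding lam_def using neg_zr zr_circ zr_add by simp

lemma lm_circ: assumes "a \<in> C" "b \<in> C" "c \<in> C"
  shows "lm (circ a b) c = lm a (lm b c)"
proof -
  have ab: "circ a b \<in> C" using assms circ_cl by auto
  have "circ (circ a b) c = circ a (add b (lm b c))"
    using circ_assoc assms circ_lm by simp
  also have "\<dots> = add (add (circ a b) (neg a)) (circ a (lm b c))"
    using brace_law assms lm_cl by simp
  also have "\<dots> = add (add (circ a b) (neg a)) (add a (lm a (lm b c)))"
    using circ_lm assms lm_cl by simp
  also have "\<dots> = add (circ a b) (lm a (lm b c))"
    using add_assoc assms ab neg_cl lm_cl neg_add add_zr add_cl by metis
  finally have "circ (circ a b) c = add (circ a b) (lm a (lm b c))" .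
  then have "add (circ a b) (lm (circ a b) c) = add (circ a b) (lm a (lm b c))"
    using circ_lm ab assms by simp
  then show ?thesis using add_cancel ab lm_cl assms by metis
qed

lemma lm_ci_lm: "a \<in> C \<Longrightarrow> b \<in> C \<Longrightarrow> lm (ci a) (lm a b) = b"
  using lm_circ[of "ci a" a b] ci_cl ci_circ zr_lm by metis

lemma lm_lm_ci: "a \<in> C \<Longrightarrow> b \<in> C \<Longrightarrow> lm a (lm (ci a) b) = b"
  using lm_circ[of a "ci a" b] ci_cl circ_ci zr_lm by metis

lemma add_circ: assumes "a \<in> C" "b \<in> C" shows "add a b = circ a (lm (ci a) b)"
  using circ_lm[of a "lm (ci a) b"] lm_lm_ci assms lm_cl ci_cl by metis

lemma aut_zr: assumes "aut \<phi>" shows "\<phi> zr = zr"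
proof -
  have c: "\<phi> zr \<in> C" using assms zr_cl unfolding aut_def bij_betw_def by auto
  have "circ (\<phi> zr) (\<phi> zr) = circ (\<phi> zr) zr"
    using assms zr_cl circ_zr[OF zr_cl] c circ_zr unfolding aut_def by metis
  then show ?thesis using circ_cancel c zr_cl by metis
qed

lemma aut_cl: "aut \<phi> \<Longrightarrow> x \<in> C \<Longrightarrow> \<phi> x \<in> C"
  unfolding aut_def bij_betw_def by auto

lemma aut_neg: assumes "aut \<phi>" "x \<in> C" shows "\<phi> (neg x) = neg (\<phi> x)"
proof -
  have "add (\<phi> x) (\<phi> (neg x)) = zr"
    using assms aut_zr add_neg neg_cl unfolding aut_def by metis
  then show ?thesis using neg_unique aut_cl assms neg_cl by metis
qed

lemma aut_ci: assumes "aut \<phi>" "x \<in> C" shows "\<phi> (ci x) = ci (\<phi> x)"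
proof -
  have "circ (\<phi> x) (\<phi> (ci x)) = zr"
    using assms aut_zr circ_ci ci_cl unfolding aut_def by metis
  then show ?thesis using ci_unique aut_cl assms ci_cl by metis
qed

lemma aut_lm: assumes "aut \<phi>" "a \<in> C" "b \<in> C" shows "\<phi> (lm a b) = lm (\<phi> a) (\<phi> b)"
  using assms aut_neg neg_cl circ_cl unfolding lam_def aut_def by metis

lemma cop_eq: "cop g x y = circ (ci (lm x g)) y"
  unfolding uc_cycle_op_def ..

lemma iso_aut: assumes "aut \<psi>" "g \<in> C"
  shows "cycle_set_iso C (cop g) (cop (\<psi> g))"
  unfolding cycle_set_iso_def
proof (intro exI[of _ \<psi>] conjI ballI)
  show "bij_betw \<psi> C C" using assms unfolding aut_def by auto
  fix x y assume "x \<in> C" "y \<in> C"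
  have m: "\<psi> (circ a b) = circ (\<psi> a) (\<psi> b)" if "a \<in> C" "b \<in> C" for a b
    using assms that unfolding aut_def by blast
  have "\<psi> (cop g x y) = circ (\<psi> (ci (lm x g))) (\<psi> y)"
    unfolding cop_eq using m \<open>x \<in> C\<close> \<open>y \<in> C\<close> assms lm_cl ci_cl by simp
  also have "\<dots> = circ (ci (\<psi> (lm x g))) (\<psi> y)" using aut_ci assms \<open>x \<in> C\<close> lm_cl by simp
  also have "\<dots> = circ (ci (lm (\<psi> x) (\<psi> g))) (\<psi> y)" using aut_lm assms \<open>x \<in> C\<close> by simp
  finally show "\<psi> (cop g x y) = cop (\<psi> g) (\<psi> x) (\<psi> y)" unfolding cop_eq .
qed

lemma iso_lm: assumes "w \<in> C" "g \<in> C"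
  shows "cycle_set_iso C (cop g) (cop (lm w g))"
  unfolding cycle_set_iso_def
proof (intro exI[of _ "\<lambda>x. circ x (ci w)"] conjI ballI)
  have cw: "ci w \<in> C" using ci_cl assms by auto
  show "bij_betw (\<lambda>x. circ x (ci w)) C C"
    by (rule bij_betw_byWitness[where f'="\<lambda>x. circ x w"])
      (use circ_assoc cw assms ci_circ circ_ci circ_zr circ_cl in auto)
  fix x y assume xy: "x \<in> C" "y \<in> C"
  have "lm (circ x (ci w)) (lm w g) = lm x g"
    using lm_circ[of x "ci w" "lm w g"] lm_lm_ci[of w g] lm_ci_lm xy cw assms lm_cl
    by (metis)
  then show "circ (cop g x y) (ci w) = cop (lm w g) (circ x (ci w)) (circ y (ci w))"
    unfolding cop_eq using circ_assoc xy cw ci_cl lm_cl assms by simp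
qed

lemma iso_trans: assumes "cycle_set_iso C o1 o2" "cycle_set_iso C o2 o3"
  shows "cycle_set_iso C o1 o3"
proof -
  obtain f1 where f1: "bij_betw f1 C C" "\<forall>x\<in>C. \<forall>y\<in>C. f1 (o1 x y) = o2 (f1 x) (f1 y)"
    using assms(1) unfolding cycle_set_iso_def by blast
  obtain f2 where f2: "bij_betw f2 C C" "\<forall>x\<in>C. \<forall>y\<in>C. f2 (o2 x y) = o3 (f2 x) (f2 y)"
    using assms(2) unfolding cycle_set_iso_def by blast
  have "bij_betw (f2 \<circ> f1) C C" using f1 f2 bij_betw_trans by blast
  moreover have "\<forall>x\<in>C. \<forall>y\<in>C. (f2 \<circ> f1) (o1 x y) = o3 ((f2 \<circ> f1) x) ((f2 \<circ> f1) y)"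
  proof (intro ballI)
    fix x y assume "x \<in> C" "y \<in> C"
    moreover have "f1 x \<in> C" "f1 y \<in> C" using f1(1) \<open>x \<in> C\<close> \<open>y \<in> C\<close>
      unfolding bij_betw_def by auto
    ultimately show "(f2 \<circ> f1) (o1 x y) = o3 ((f2 \<circ> f1) x) ((f2 \<circ> f1) y)"
      using f1(2) f2(2) by simp
  qed
  ultimately show ?thesis unfolding cycle_set_iso_def by blast
qed

lemma addc_cl: assumes "S \<subseteq> C" "x \<in> addc add zr S" shows "x \<in> C"
  using assms(2) by (induction x rule: addc.induct) (use assms(1) in \<open>auto simp: zr_cl add_cl\<close>)

lemma add_gen_addc: assumes "S \<subseteq> C" shows "add_gen add neg zr S \<subseteq> addc add zr S"
proof
  obtain K where K: "\<forall>x\<in>C. neg x = (add x ^^ K) zr" using neg_pow by blast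
  have pw: "(add x ^^ n) zr \<in> addc add zr S" if "x \<in> addc add zr S" for x n
    by (induction n) (auto intro: addc.intros that)
  fix x assume "x \<in> add_gen add neg zr S"
  then show "x \<in> addc add zr S"
  proof (induction x rule: add_gen.induct)
    case (uminus x)
    then show ?case using K addc_cl[OF assms] pw by metis
  qed (auto intro: addc.intros)
qed

lemma cgen_cl: assumes "S \<subseteq> C" "x \<in> cgen circ zr S" shows "x \<in> C"
  using assms(2) by (induction x rule: cgen.induct) (use assms(1) in \<open>auto simp: zr_cl circ_cl\<close>)

lemma addc_cgen: assumes SC: "S \<subseteq> C" and inv: "\<forall>a\<in>C. \<forall>t\<in>S. lm a t \<in> S"
  and y: "y \<in> addc add zr S"
  shows "\<forall>a\<in>C. lm a y \<in> cgen circ zr S"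
  using y
proof (induction y rule: addc.induct)
  case zr then show ?case using lm_zr by (auto intro: cgen.intros)
next
  case (base s) then show ?case using inv by (auto intro: cgen.intros)
next
  case (plus x y)
  have xC: "x \<in> C" and yC: "y \<in> C" using plus addc_cl SC by auto
  show ?case
  proof
    fix a assume a: "a \<in> C"
    have lx: "lm a x \<in> C" using lm_cl a xC by auto
    have "lm a (add x y) = add (lm a x) (lm a y)" using lm_add a xC yC by simp
    also have "\<dots> = circ (lm a x) (lm (ci (lm a x)) (lm a y))"
      using add_circ lx lm_cl a yC by simp
    also have "\<dots> = circ (lm a x) (lm (circ (ci (lm a x)) a) y)"
      using lm_circ ci_cl lx a yC by simp
    finally show "lm a (add x y) \<in> cgen circ zr S"
      using plus.IH a circ_cl ci_cl lx by (auto intro: cgen.mul)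
  qed
qed

lemma iso_imp_aut:
  assumes tcb: "transitive_cycle_base C add neg zr circ T" and gT: "g \<in> T" and g': "g' \<in> C"
    and iso: "cycle_set_iso C (cop g) (cop g')"
  shows "\<exists>\<phi> e. aut \<phi> \<and> e \<in> C \<and> \<phi> g = lm e g'"
proof -
  obtain h where h: "h \<in> C" "T = lam_orbit C add neg circ h" and gen: "add_gen add neg zr T = C"
    using tcb unfolding transitive_cycle_base_def by blast
  obtain x0 where x0: "x0 \<in> C" "g = lm x0 h" using gT h unfolding lam_orbit_def by blast
  have gC: "g \<in> C" using x0 h lm_cl by auto
  have Teq: "T = {lm x g | x. x \<in> C}"
  proof -
    have "lm x h = lm (circ x (ci x0)) g" if "x \<in> C" for x
    proof -
      have "lm (circ x (ci x0)) g = lm x (lm (ci x0) g)" by (rule lm_circ) (use that x0 h gC ci_cl in auto)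
      also have "lm (ci x0) g = h" using x0 h lm_ci_lm by simp
      finally show ?thesis by simp
    qed
    moreover have "lm x g = lm (circ x x0) h" if "x \<in> C" for x
      using lm_circ x0 h that by simp
    ultimately show ?thesis unfolding h lam_orbit_def using circ_cl ci_cl x0 by blast
  qed
  have TC: "T \<subseteq> C" using Teq lm_cl gC by auto
  have Tinv: "\<forall>a\<in>C. \<forall>t\<in>T. lm a t \<in> T"
    unfolding Teq using lm_circ gC circ_cl by (auto) (metis circ_cl)
  have Ccg: "C \<subseteq> cgen circ zr T"
  proof
    fix y assume "y \<in> C"
    then have "y \<in> addc add zr T" using add_gen_addc[OF TC] gen by auto
    then have "lm zr y \<in> cgen circ zr T" using addc_cgen[OF TC Tinv] zr_cl by blast
    then show "y \<in> cgen circ zr T" using zr_lm \<open>y \<in> C\<close> by simp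
  qed
  obtain f where fb: "bij_betw f C C" and hf: "\<forall>x\<in>C. \<forall>y\<in>C. f (cop g x y) = cop g' (f x) (f y)"
    using iso unfolding cycle_set_iso_def by blast
  have fC: "x \<in> C \<Longrightarrow> f x \<in> C" for x using fb unfolding bij_betw_def by auto
  define e where "e = f zr"
  have eC: "e \<in> C" using fC zr_cl e_def by auto
  define \<phi> where "\<phi> x = circ (f x) (ci e)" for x
  have phC: "x \<in> C \<Longrightarrow> \<phi> x \<in> C" for x using fC eC ci_cl circ_cl \<phi>_def by auto
  have fphi: "x \<in> C \<Longrightarrow> f x = circ (\<phi> x) e" for x
    unfolding \<phi>_def using circ_assoc fC eC ci_cl ci_circ circ_zr by simp
  define P where "P h \<longleftrightarrow> h \<in> C \<and> (\<forall>y\<in>C. f (circ h y) = circ (\<phi> h) (f y))" for h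
  have Q: "P (ci (lm x g)) \<and> \<phi> (ci (lm x g)) = ci (lm (f x) g')" if x: "x \<in> C" for x
  proof -
    have c: "ci (lm x g) \<in> C" using x gC lm_cl ci_cl by auto
    have c': "ci (lm (f x) g') \<in> C" using x fC g' lm_cl ci_cl by auto
    have 1: "f (circ (ci (lm x g)) y) = circ (ci (lm (f x) g')) (f y)" if "y \<in> C" for y
      using hf x that unfolding cop_eq by simp
    have "f (ci (lm x g)) = circ (ci (lm (f x) g')) e"
      using 1[OF zr_cl] circ_zr c e_def by simp
    then have 2: "\<phi> (ci (lm x g)) = ci (lm (f x) g')"
      unfolding \<phi>_def using circ_assoc c' eC ci_cl circ_ci circ_zr by simp
    show ?thesis using 1 2 c unfolding P_def by simp
  qed
  have Pmul: "P (circ a b) \<and> \<phi> (circ a b) = circ (\<phi> a) (\<phi> b)" if "P a" "P b" for a b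
  proof -
    have a: "a \<in> C" and b: "b \<in> C" using that P_def by auto
    have 1: "f (circ (circ a b) y) = circ (\<phi> a) (circ (\<phi> b) (f y))" if "y \<in> C" for y
      using \<open>P a\<close> \<open>P b\<close> a b that circ_assoc circ_cl unfolding P_def by simp
    have "f (circ a b) = circ (\<phi> a) (circ (\<phi> b) e)" using 1[OF zr_cl] circ_zr a b circ_cl e_def by simp
    then have "\<phi> (circ a b) = circ (circ (\<phi> a) (circ (\<phi> b) e)) (ci e)" by (simp add: \<phi>_def)
    also have "\<dots> = circ (\<phi> a) (circ (\<phi> b) (circ e (ci e)))"
      using circ_assoc phC a b eC ci_cl circ_cl by simp
    also have "\<dots> = circ (\<phi> a) (\<phi> b)" using circ_ci eC circ_zr phC b by simp
    finally have 2: "\<phi> (circ a b) = circ (\<phi> a) (\<phi> b)" .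
    show ?thesis using 1 2 a b circ_assoc phC circ_cl fC unfolding P_def by simp
  qed
  have Pci: "P (ci a)" if "P a" for a
  proof -
    have a: "a \<in> C" using that P_def by auto
    have 1: "f (circ (ci a) y) = circ (ci (\<phi> a)) (f y)" if y: "y \<in> C" for y
    proof -
      have "f y = f (circ a (circ (ci a) y))" using circ_assoc[of a "ci a" y] a y ci_cl circ_ci zr_circ by simp
      also have "\<dots> = circ (\<phi> a) (f (circ (ci a) y))" using \<open>P a\<close> a y ci_cl circ_cl unfolding P_def by simp
      finally have "f y = circ (\<phi> a) (f (circ (ci a) y))" .
      then show ?thesis using circ_assoc ci_cl phC a ci_circ zr_circ fC circ_cl y by metis
    qed
    have "f (ci a) = circ (ci (\<phi> a)) e" using 1[OF zr_cl] circ_zr a ci_cl e_def by simp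
    then have "\<phi> (ci a) = circ (circ (ci (\<phi> a)) e) (ci e)" by (simp add: \<phi>_def)
    also have "\<dots> = ci (\<phi> a)" using circ_assoc phC a eC ci_cl circ_ci circ_zr by simp
    finally have "\<phi> (ci a) = ci (\<phi> a)" .
    then show ?thesis using 1 a ci_cl unfolding P_def by simp
  qed
  have Pzr: "P zr" unfolding P_def \<phi>_def e_def using zr_circ zr_cl circ_ci fC by simp
  have PT: "P t" if tT: "t \<in> T" for t
  proof -
    obtain x where x: "x \<in> C" "t = lm x g" using tT Teq by blast
    then show ?thesis using Pci[OF conjunct1[OF Q[OF x(1)]]] ci_ci lm_cl gC by simp
  qed
  have Pall: "P x" if "x \<in> C" for x
  proof -
    have "x \<in> cgen circ zr T" using Ccg that by auto
    then show ?thesis by (induction x rule: cgen.induct) (auto simp: Pzr PT Pmul)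
  qed
  have phmul: "\<phi> (circ a b) = circ (\<phi> a) (\<phi> b)" if "a \<in> C" "b \<in> C" for a b
    using Pmul Pall that by blast
  have phzr: "\<phi> zr = zr" unfolding \<phi>_def e_def using circ_ci fC zr_cl by simp
  have phci: "\<phi> (ci a) = ci (\<phi> a)" if "a \<in> C" for a
    using phmul[of a "ci a"] that ci_cl circ_ci phzr ci_unique phC by metis
  have phbij: "bij_betw \<phi> C C"
  proof (rule bij_betw_imageI)
    show "inj_on \<phi> C"
    proof (rule inj_onI)
      fix x y assume "x \<in> C" "y \<in> C" "\<phi> x = \<phi> y"
      then have "f x = f y" using fphi by metis
      then show "x = y" using fb \<open>x \<in> C\<close> \<open>y \<in> C\<close> unfolding bij_betw_def inj_on_def by blast
    qed
    show "\<phi> ` C = C"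
    proof
      show "\<phi> ` C \<subseteq> C" using phC by auto
      show "C \<subseteq> \<phi> ` C"
      proof
        fix w assume w: "w \<in> C"
        then have "circ w e \<in> C" using eC circ_cl by auto
        then have "circ w e \<in> f ` C" using fb unfolding bij_betw_def by simp
        then obtain x where x: "x \<in> C" "f x = circ w e" by (metis imageE)
        then have "circ (\<phi> x) e = circ w e" using fphi by simp
        then have "\<phi> x = w" using circ_cancel_r eC phC x w by metis
        then show "w \<in> \<phi> ` C" using x by auto
      qed
    qed
  qed
  have phlm0: "\<phi> (lm x g) = lm (circ (\<phi> x) e) g'" if x: "x \<in> C" for x
  proof -
    have "ci (\<phi> (lm x g)) = ci (lm (f x) g')" using Q[OF x] phci lm_cl x gC by simp
    then have "\<phi> (lm x g) = lm (f x) g'" using ci_ci phC lm_cl x gC g' fC by metis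
    then show ?thesis using fphi x by simp
  qed
  have phg: "\<phi> g = lm e g'"
    using phlm0[OF zr_cl] zr_lm gC phzr zr_circ eC by simp
  have phlm: "\<phi> (lm x g) = lm (\<phi> x) (\<phi> g)" if x: "x \<in> C" for x
    using phlm0[OF x] phg lm_circ phC x eC g' by simp
  define D where "D = {w\<in>C. \<forall>x\<in>C. \<phi> (lm x w) = lm (\<phi> x) (\<phi> w)}"
  have Dinv: "lm y w \<in> D" if "w \<in> D" "y \<in> C" for w y
  proof -
    have w: "w \<in> C" using that D_def by auto
    have "\<phi> (lm x (lm y w)) = lm (\<phi> x) (\<phi> (lm y w))" if x: "x \<in> C" for x
    proof -
      have "\<phi> (lm x (lm y w)) = \<phi> (lm (circ x y) w)" using lm_circ x \<open>y \<in> C\<close> w by simp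
      also have "\<dots> = lm (\<phi> (circ x y)) (\<phi> w)" using \<open>w \<in> D\<close> circ_cl x \<open>y \<in> C\<close> D_def by simp
      also have "\<dots> = lm (\<phi> x) (lm (\<phi> y) (\<phi> w))" using phmul lm_circ phC x \<open>y \<in> C\<close> w by simp
      also have "\<dots> = lm (\<phi> x) (\<phi> (lm y w))" using \<open>w \<in> D\<close> \<open>y \<in> C\<close> D_def by simp
      finally show ?thesis .
    qed
    then show ?thesis unfolding D_def using lm_cl w \<open>y \<in> C\<close> by simp
  qed
  have addl: "\<phi> (add u1 u2) = add (\<phi> u1) (\<phi> u2)" if "u1 \<in> C" "u2 \<in> D" for u1 u2
  proof -
    have u2: "u2 \<in> C" using that D_def by auto
    have "\<phi> (add u1 u2) = \<phi> (circ u1 (lm (ci u1) u2))" using add_circ that u2 by simp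
    also have "\<dots> = circ (\<phi> u1) (\<phi> (lm (ci u1) u2))" using phmul that lm_cl ci_cl u2 by simp
    also have "\<dots> = circ (\<phi> u1) (lm (ci (\<phi> u1)) (\<phi> u2))"
      using \<open>u2 \<in> D\<close> D_def ci_cl that phci by simp
    also have "\<dots> = add (\<phi> u1) (\<phi> u2)" using add_circ phC that u2 by simp
    finally show ?thesis .
  qed
  have TD: "T \<subseteq> D"
  proof
    fix t assume "t \<in> T"
    then obtain y where y: "y \<in> C" "t = lm y g" using Teq by blast
    have "\<phi> (lm x t) = lm (\<phi> x) (\<phi> t)" if x: "x \<in> C" for x
    proof -
      have "\<phi> (lm x t) = \<phi> (lm (circ x y) g)" using y lm_circ x gC by simp
      also have "\<dots> = lm (\<phi> (circ x y)) (\<phi> g)" using phlm circ_cl x y by simp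
      also have "\<dots> = lm (\<phi> x) (lm (\<phi> y) (\<phi> g))" using phmul lm_circ phC x y gC by simp
      also have "\<dots> = lm (\<phi> x) (\<phi> t)" using phlm y by simp
      finally show ?thesis .
    qed
    then show "t \<in> D" unfolding D_def using y lm_cl gC by simp
  qed
  have zD: "zr \<in> D" unfolding D_def using zr_cl lm_zr phzr phC by simp
  have addD: "add w1 w2 \<in> D" if wD: "w1 \<in> D" "w2 \<in> D" for w1 w2
  proof -
    have w: "w1 \<in> C" "w2 \<in> C" using wD D_def by auto
    have "\<phi> (lm x (add w1 w2)) = lm (\<phi> x) (\<phi> (add w1 w2))" if x: "x \<in> C" for x
    proof -
      have "\<phi> (lm x (add w1 w2)) = \<phi> (add (lm x w1) (lm x w2))" using lm_add x w by simp
      also have "\<dots> = add (\<phi> (lm x w1)) (\<phi> (lm x w2))" using addl[OF lm_cl[OF x w(1)] Dinv[OF wD(2) x]] .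
      also have "\<dots> = add (lm (\<phi> x) (\<phi> w1)) (lm (\<phi> x) (\<phi> w2))" using wD x D_def by simp
      also have "\<dots> = lm (\<phi> x) (add (\<phi> w1) (\<phi> w2))" using lm_add phC x w by simp
      also have "\<dots> = lm (\<phi> x) (\<phi> (add w1 w2))" using addl w wD by simp
      finally show ?thesis .
    qed
    then show ?thesis unfolding D_def using add_cl w by simp
  qed
  have CD: "C \<subseteq> D"
  proof
    fix y assume "y \<in> C"
    then have "y \<in> addc add zr T" using add_gen_addc[OF TC] gen by auto
    then show "y \<in> D" by (induction y rule: addc.induct) (use zD TD addD in auto)
  qed
  have "aut \<phi>" unfolding aut_def using phbij phmul addl CD by auto
  then show ?thesis using phg eC by blast
qed

end

definition tup_lam :: "nat set \<Rightarrow> (nat \<Rightarrow> nat) \<Rightarrow> (nat \<Rightarrow> nat) \<Rightarrow> (nat \<Rightarrow> int) \<Rightarrow> (nat \<Rightarrow> int) \<Rightarrow> (nat \<Rightarrow> int)" where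
  "tup_lam I N E x y = (\<lambda>i. if i \<in> I then ((1 + int (E i) * x i) * y i) mod int (N i) else 0)"

definition tmul :: "nat set \<Rightarrow> (nat \<Rightarrow> nat) \<Rightarrow> (nat \<Rightarrow> int) \<Rightarrow> (nat \<Rightarrow> int) \<Rightarrow> (nat \<Rightarrow> int)" where
  "tmul I N u x = (\<lambda>i. if i \<in> I then (u i * x i) mod int (N i) else 0)"

lemma circ_modL: "((a mod N) + b + E*(a mod N)*b) mod N = (a + b + E*a*b) mod (N::int)"
  unfolding cong_def[symmetric] by (intro cong_add cong_mult cong_refl) (simp_all add: cong_def)
lemma circ_modR: "(a + (b mod N) + E*a*(b mod N)) mod N = (a + b + E*a*b) mod (N::int)"
  unfolding cong_def[symmetric] by (intro cong_add cong_mult cong_refl) (simp_all add: cong_def)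

lemma mod3: "((a mod N + b mod N) mod N + c mod N) mod N = (a + b + c) mod (N::int)"
  by (simp add: mod_add_eq)

context
  fixes I :: "nat set" and N :: "nat \<Rightarrow> nat" and E :: "nat \<Rightarrow> nat"
  assumes N0: "\<forall>i\<in>I. N i > 0"
begin

lemma tz: "(\<lambda>_. 0) \<in> tup_car I N" using N0 by (auto simp: tup_car_def)
lemma tcar_mod: "x \<in> tup_car I N \<Longrightarrow> i \<in> I \<Longrightarrow> x i mod int (N i) = x i"
  by (simp add: tup_car_def)
lemma tcar_out: "x \<in> tup_car I N \<Longrightarrow> i \<notin> I \<Longrightarrow> x i = 0"
  by (simp add: tup_car_def)
lemma tcar_rng: "x \<in> tup_car I N \<Longrightarrow> i \<in> I \<Longrightarrow> 0 \<le> x i \<and> x i < int (N i)"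
  by (simp add: tup_car_def)
lemma tadd_cl: "tup_add I N x y \<in> tup_car I N" using N0 by (auto simp: tup_car_def tup_add_def)
lemma tneg_cl: "tup_neg I N x \<in> tup_car I N" using N0 by (auto simp: tup_car_def tup_neg_def)
lemma tcirc_cl: "tup_circ I N E x y \<in> tup_car I N" using N0 by (auto simp: tup_car_def tup_circ_def)
lemma tlam_cl: "tup_lam I N E x y \<in> tup_car I N" using N0 by (auto simp: tup_car_def tup_lam_def)
lemma tmul_cl: "tmul I N u x \<in> tup_car I N" using N0 by (auto simp: tup_car_def tmul_def)

lemma tadd_assoc: "tup_add I N (tup_add I N x y) w = tup_add I N x (tup_add I N y w)"
  by (auto simp: tup_add_def fun_eq_iff mod_simps add.assoc)
lemma tadd_comm: "tup_add I N x y = tup_add I N y x"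
  by (auto simp: tup_add_def fun_eq_iff add.commute)
lemma tadd_zr: "x \<in> tup_car I N \<Longrightarrow> tup_add I N x (\<lambda>_. 0) = x"
  by (auto simp: tup_add_def fun_eq_iff tcar_mod tcar_out)
lemma tadd_neg: "tup_add I N x (tup_neg I N x) = (\<lambda>_. 0)"
  by (auto simp: tup_add_def tup_neg_def fun_eq_iff mod_simps)
lemma tadd_cancel: assumes "x \<in> tup_car I N" "y \<in> tup_car I N" "w \<in> tup_car I N"
  "tup_add I N x y = tup_add I N x w" shows "y = w"
proof -
  have "tup_add I N (tup_neg I N x) (tup_add I N x y) = tup_add I N (tup_neg I N x) (tup_add I N x w)"
    using assms by simp
  then show ?thesis using tadd_assoc tadd_comm tadd_neg tadd_zr assms by metis
qed

lemma tcirc_comm: "tup_circ I N E x y = tup_circ I N E y x"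
  by (auto simp: tup_circ_def fun_eq_iff algebra_simps)

lemma tcirc_assoc: "tup_circ I N E (tup_circ I N E x y) w = tup_circ I N E x (tup_circ I N E y w)"
proof -
  have "((x i + y i + int (E i) * x i * y i) mod int (N i) + w i
         + int (E i) * ((x i + y i + int (E i) * x i * y i) mod int (N i)) * w i) mod int (N i)
      = (x i + (y i + w i + int (E i) * y i * w i) mod int (N i)
         + int (E i) * x i * ((y i + w i + int (E i) * y i * w i) mod int (N i))) mod int (N i)" for i
    unfolding circ_modL circ_modR by (simp add: algebra_simps)
  then show ?thesis by (auto simp: tup_circ_def fun_eq_iff)
qed

lemma tcirc_zr: "x \<in> tup_car I N \<Longrightarrow> tup_circ I N E x (\<lambda>_. 0) = x"
  by (auto simp: tup_circ_def fun_eq_iff tcar_mod tcar_out)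
lemma tzr_circ: "x \<in> tup_car I N \<Longrightarrow> tup_circ I N E (\<lambda>_. 0) x = x"
  by (auto simp: tup_circ_def fun_eq_iff tcar_mod tcar_out)

lemma tbrace: "tup_circ I N E x (tup_add I N y w)
   = tup_add I N (tup_add I N (tup_circ I N E x y) (tup_neg I N x)) (tup_circ I N E x w)"
proof -
  have "(x i + (y i + w i) mod int (N i) + int (E i) * x i * ((y i + w i) mod int (N i))) mod int (N i)
      = (((x i + y i + int (E i) * x i * y i) mod int (N i) + - x i mod int (N i)) mod int (N i)
         + (x i + w i + int (E i) * x i * w i) mod int (N i)) mod int (N i)" for i
    unfolding circ_modR mod3 by (simp add: algebra_simps)
  then show ?thesis by (auto simp: tup_circ_def tup_add_def tup_neg_def fun_eq_iff)
qed

lemma tcirc_inv: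
  assumes cop: "\<forall>i\<in>I. \<forall>z. coprime (1 + int (E i) * z) (int (N i))" and x: "x \<in> tup_car I N"
  shows "\<exists>y\<in>tup_car I N. tup_circ I N E x y = (\<lambda>_. 0) \<and> tup_circ I N E y x = (\<lambda>_. 0)"
proof -
  define u where "u i = (SOME w. [(1 + int (E i) * x i) * w = 1] (mod int (N i)))" for i
  have u: "[(1 + int (E i) * x i) * u i = 1] (mod int (N i))" if "i \<in> I" for i
    unfolding u_def using cong_solve_coprime_int[OF cop[rule_format, OF that]] by (rule someI_ex)
  define y where "y = (\<lambda>i. if i \<in> I then (- x i * u i) mod int (N i) else 0)"
  have y: "y \<in> tup_car I N" using N0 by (auto simp: y_def tup_car_def)
  have "(x i + (- x i * u i) mod int (N i) + int (E i) * x i * ((- x i * u i) mod int (N i))) mod int (N i) = 0"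
    if i: "i \<in> I" for i
  proof -
    have "(x i + (- x i * u i) mod int (N i) + int (E i) * x i * ((- x i * u i) mod int (N i))) mod int (N i)
        = (x i - x i * ((1 + int (E i) * x i) * u i)) mod int (N i)"
      unfolding circ_modR by (simp add: algebra_simps)
    also have "\<dots> = (x i - x i * 1) mod int (N i)"
      using u[OF i] unfolding cong_def by (metis mod_diff_right_eq mod_mult_right_eq)
    finally show ?thesis by simp
  qed
  then have "tup_circ I N E x y = (\<lambda>_. 0)" by (auto simp: tup_circ_def fun_eq_iff y_def)
  then show ?thesis using y tcirc_comm by metis
qed

lemma tlam: assumes "x \<in> tup_car I N" "y \<in> tup_car I N"
  shows "lam (tup_add I N) (tup_neg I N) (tup_circ I N E) x y = tup_lam I N E x y"
proof -
  have "((- x i) mod int (N i) + (x i + y i + int (E i) * x i * y i) mod int (N i)) mod int (N i)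
     = ((1 + int (E i) * x i) * y i) mod int (N i)" for i
    unfolding mod_add_eq by (simp add: algebra_simps)
  then show ?thesis unfolding lam_def
    by (auto simp: tup_add_def tup_neg_def tup_circ_def tup_lam_def fun_eq_iff)
qed

lemma tsmul: "x \<in> tup_car I N \<Longrightarrow>
  (tup_add I N x ^^ n) (\<lambda>_. 0) = (\<lambda>i. if i \<in> I then (int n * x i) mod int (N i) else 0)"
  unfolding tup_add_gadd tup_car_gcar using gsmul N0 by blast

end

lemma tadd_comm': "tup_add I N x y = tup_add I N y x"
  by (auto simp: tup_add_def fun_eq_iff add.commute)

lemma brace_b: "(b + (x1 + x2) mod N) mod N = (((b + x1) mod N + (-b) mod N) mod N + (b + x2) mod N) mod (N::int)"
proof -
  have l: "(b + (x1 + x2) mod N) mod N = (b + (x1 + x2)) mod N" by (rule mod_add_right_eq)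
  show ?thesis unfolding mod3 l by (simp add: algebra_simps)
qed

lemma tbrace_b: "tup_add I N b (tup_add I N x1 x2)
   = tup_add I N (tup_add I N (tup_add I N b x1) (tup_neg I N b)) (tup_add I N b x2)"
proof (rule ext)
  fix i show "tup_add I N b (tup_add I N x1 x2) i
   = tup_add I N (tup_add I N (tup_add I N b x1) (tup_neg I N b)) (tup_add I N b x2) i"
  proof (cases "i \<in> I")
    case True
    show ?thesis unfolding tup_add_def tup_neg_def by (simp only: True if_True) (rule brace_b)
  next
    case False
    show ?thesis unfolding tup_add_def tup_neg_def by (simp only: False if_False)
  qed
qed

locale setting =
  fixes v m r :: nat and NA EA NB EB :: "nat \<Rightarrow> nat"
    and \<alpha> :: "(nat \<Rightarrow> int) \<Rightarrow> (nat \<Rightarrow> int) \<Rightarrow> (nat \<Rightarrow> int)"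
  assumes mr: "m \<le> r"
    and NA1: "\<forall>i\<in>{1..v}. NA i > 1" and NB1: "\<forall>j\<in>{1..r}. NB j > 1"
    and copEA: "\<forall>i\<in>{1..v}. \<forall>z. coprime (1 + int (EA i) * z) (int (NA i))"
    and copEB: "\<forall>j\<in>{1..m}. \<forall>z. coprime (1 + int (EB j) * z) (int (NB j))"
    and \<alpha>_aut: "\<forall>x\<in>tup_car {1..m} NB. add_aut {m+1..r} NB (\<alpha> x)"
    and \<alpha>_hom: "\<forall>x\<in>tup_car {1..m} NB. \<forall>y\<in>tup_car {1..m} NB. \<forall>z\<in>tup_car {m+1..r} NB.
                  \<alpha> (tup_circ {1..m} NB EB x y) z = \<alpha> x (\<alpha> y z)"
    and copAA: "\<forall>i\<in>{1..v}. \<forall>k\<in>{1..v}. i \<noteq> k \<longrightarrow> coprime (NA i) (NA k)"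
    and copBB: "\<forall>i\<in>{1..r}. \<forall>k\<in>{1..r}. i \<noteq> k \<longrightarrow> coprime (NB i) (NB k)"
    and copAB: "\<forall>i\<in>{1..v}. \<forall>k\<in>{1..r}. coprime (NA i) (NB k)"
begin

abbreviation "IA \<equiv> {1..v}"
abbreviation "IB \<equiv> {m+1..r}"
abbreviation "IC \<equiv> {1..m}"
abbreviation "Car \<equiv> br_car v m r NA NB"
abbreviation "add \<equiv> br_add v m r NA NB"
abbreviation "neg \<equiv> br_neg v m r NA NB"
abbreviation "circ \<equiv> br_circ v m r NA EA NB EB \<alpha>"
abbreviation "TA \<equiv> tup_car IA NA"
abbreviation "TB \<equiv> tup_car IB NB"
abbreviation "TC \<equiv> tup_car IC NB"

lemma NA0: "\<forall>i\<in>IA. NA i > 0" using NA1 by auto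
lemma NB0: "\<forall>i\<in>IB. NB i > 0"
proof
  fix i assume "i \<in> IB" then have "i \<in> {1..r}" by auto
  then show "NB i > 0" using NB1 by fastforce
qed
lemma NC0: "\<forall>i\<in>IC. NB i > 0"
proof
  fix i assume "i \<in> IC" then have "i \<in> {1..r}" using mr by auto
  then show "NB i > 0" using NB1 by fastforce
qed

lemma car_iff: "(a, b, c) \<in> Car \<longleftrightarrow> a \<in> TA \<and> b \<in> TB \<and> c \<in> TC"
  by (simp add: br_car_def)
lemma add_eq: "add (a, b, c) (a', b', c') = (tup_add IA NA a a', tup_add IB NB b b', tup_add IC NB c c')"
  by (simp add: br_add_def)
lemma neg_eq: "neg (a, b, c) = (tup_neg IA NA a, tup_neg IB NB b, tup_neg IC NB c)"
  by (simp add: br_neg_def)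
lemma circ_eq: "circ (a, b, c) (a', b', c') =
   (tup_circ IA NA EA a a', tup_add IB NB b (\<alpha> c b'), tup_circ IC NB EB c c')"
  by (simp add: br_circ_def)
lemma zero_eq: "br_zero = ((\<lambda>_. 0), (\<lambda>_. 0), (\<lambda>_. 0))" by (simp add: br_zero_def)

lemma \<alpha>_cl: "c \<in> TC \<Longrightarrow> b \<in> TB \<Longrightarrow> \<alpha> c b \<in> TB"
  using \<alpha>_aut unfolding add_aut_def bij_betw_def by blast
lemma \<alpha>_add: "c \<in> TC \<Longrightarrow> b \<in> TB \<Longrightarrow> b' \<in> TB \<Longrightarrow> \<alpha> c (tup_add IB NB b b') = tup_add IB NB (\<alpha> c b) (\<alpha> c b')"
  using \<alpha>_aut unfolding add_aut_def by blast
lemma \<alpha>_inj: "c \<in> TC \<Longrightarrow> inj_on (\<alpha> c) TB"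
  using \<alpha>_aut unfolding add_aut_def bij_betw_def by blast
lemma \<alpha>_surj: "c \<in> TC \<Longrightarrow> \<alpha> c ` TB = TB"
  using \<alpha>_aut unfolding add_aut_def bij_betw_def by blast
lemma \<alpha>_comp: "c \<in> TC \<Longrightarrow> c' \<in> TC \<Longrightarrow> b \<in> TB \<Longrightarrow> \<alpha> (tup_circ IC NB EB c c') b = \<alpha> c (\<alpha> c' b)"
  using \<alpha>_hom by blast

lemma \<alpha>_zr: assumes "c \<in> TC" shows "\<alpha> c (\<lambda>_. 0) = (\<lambda>_. 0)"
proof -
  have z: "(\<lambda>_. 0) \<in> TB" using tz[OF NB0] .
  have "tup_add IB NB (\<lambda>_. 0) (\<lambda>_. 0) = (\<lambda>_. (0::int))" by (auto simp: tup_add_def)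
  then have "tup_add IB NB (\<alpha> c (\<lambda>_. 0)) (\<lambda>_. 0) = tup_add IB NB (\<alpha> c (\<lambda>_. 0)) (\<alpha> c (\<lambda>_. 0))"
    using \<alpha>_add[OF assms z z] tadd_zr[OF NB0 \<alpha>_cl[OF assms z]] by simp
  then show ?thesis using tadd_cancel[OF NB0] \<alpha>_cl[OF assms z] z by metis
qed

lemma \<alpha>_neg: assumes "c \<in> TC" "b \<in> TB" shows "\<alpha> c (tup_neg IB NB b) = tup_neg IB NB (\<alpha> c b)"
proof -
  have "tup_add IB NB (\<alpha> c b) (\<alpha> c (tup_neg IB NB b)) = \<alpha> c (tup_add IB NB b (tup_neg IB NB b))"
    using \<alpha>_add[OF assms(1) assms(2) tneg_cl[OF NB0, of b]] by simp
  also have "\<dots> = (\<lambda>_. 0)" using tadd_neg[OF NB0] \<alpha>_zr[OF assms(1)] by simp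
  also have "\<dots> = tup_add IB NB (\<alpha> c b) (tup_neg IB NB (\<alpha> c b))" using tadd_neg[OF NB0] by simp
  finally have "tup_add IB NB (\<alpha> c b) (\<alpha> c (tup_neg IB NB b)) = tup_add IB NB (\<alpha> c b) (tup_neg IB NB (\<alpha> c b))" .
  then show ?thesis using tadd_cancel[OF NB0] \<alpha>_cl assms tneg_cl[OF NB0] by metis
qed

lemma tcirc00: "tup_circ IC NB EB (\<lambda>_. 0) (\<lambda>_. 0) = (\<lambda>_. 0)"
  by (auto simp: tup_circ_def)

lemma \<alpha>_0: assumes "b \<in> TB" shows "\<alpha> (\<lambda>_. 0) b = b"
proof -
  have z: "(\<lambda>_. 0) \<in> TC" using tz[OF NC0] .
  have "\<alpha> (\<lambda>_. 0) b = \<alpha> (\<lambda>_. 0) (\<alpha> (\<lambda>_. 0) b)" using \<alpha>_comp[OF z z assms] tcirc00 by simp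
  then show ?thesis using \<alpha>_inj[OF z] assms \<alpha>_cl[OF z] unfolding inj_on_def by metis
qed

lemma car_cases: assumes "x \<in> Car" obtains a b c where "x = (a, b, c)" "a \<in> TA" "b \<in> TB" "c \<in> TC"
  using assms by (cases x) (auto simp: car_iff)

lemma zero_car: "br_zero \<in> Car" using tz NA0 NB0 NC0 by (simp add: zero_eq car_iff)

definition PP where "PP = (\<Prod>i\<in>IA. NA i) * (\<Prod>i\<in>IB. NB i) * (\<Prod>i\<in>IC. NB i)"

lemma PP_pos: "PP > 0" unfolding PP_def using NA0 NB0 NC0 by (simp add: prod_pos)

lemma smul: assumes "x \<in> Car"
  shows "(add x ^^ n) br_zero = (case x of (a, b, c) \<Rightarrow>
     ((tup_add IA NA a ^^ n) (\<lambda>_. 0), (tup_add IB NB b ^^ n) (\<lambda>_. 0), (tup_add IC NB c ^^ n) (\<lambda>_. 0)))"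
proof (induction n)
  case 0 then show ?case by (cases x) (simp add: zero_eq)
next
  case (Suc n)
  then show ?case by (cases x) (simp add: add_eq)
qed

lemma neg_pow_tup: assumes N0: "\<forall>i\<in>I. N i > 0" and fin: "finite I" and x: "x \<in> tup_car I N"
  and dv: "\<forall>i\<in>I. N i dvd P" and P: "P > 0"
  shows "tup_neg I N x = (tup_add I N x ^^ (P - 1)) (\<lambda>_. 0)"
proof -
  have "(- x i) mod int (N i) = (int (P - 1) * x i) mod int (N i)" if i: "i \<in> I" for i
  proof -
    have "int (N i) dvd int P * x i" using dv i by simp
    then obtain k where k: "int P * x i = int (N i) * k" by (auto elim: dvdE)
    have "int (P - 1) * x i = - x i + k * int (N i)" using P k by (simp add: of_nat_diff algebra_simps)
    then show ?thesis by (simp only: mod_mult_self1)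
  qed
  then show ?thesis using tsmul[OF N0 x] by (auto simp: tup_neg_def fun_eq_iff)
qed

sublocale B: brace Car add neg br_zero circ
proof unfold_locales
  fix x y assume "x \<in> Car" "y \<in> Car"
  then show "add x y \<in> Car"
    by (elim car_cases) (simp add: add_eq car_iff tadd_cl NA0 NB0 NC0)
next
  fix x assume "x \<in> Car" then show "neg x \<in> Car"
    by (elim car_cases) (simp add: neg_eq car_iff tneg_cl NA0 NB0 NC0)
next
  show "br_zero \<in> Car" by (rule zero_car)
next
  fix x y w assume "x \<in> Car" "y \<in> Car" "w \<in> Car"
  then show "add (add x y) w = add x (add y w)"
    by (elim car_cases) (simp add: add_eq tadd_assoc NA0 NB0 NC0)
next
  fix x y assume "x \<in> Car" "y \<in> Car"
  then show "add x y = add y x"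
    by (elim car_cases) (simp add: add_eq tadd_comm')
next
  fix x assume "x \<in> Car" then show "add x br_zero = x"
    by (elim car_cases) (simp add: add_eq zero_eq tadd_zr NA0 NB0 NC0)
next
  fix x assume "x \<in> Car" then show "add x (neg x) = br_zero"
    by (elim car_cases) (simp add: add_eq neg_eq zero_eq tadd_neg NA0 NB0 NC0)
next
  fix x y assume "x \<in> Car" "y \<in> Car"
  then show "circ x y \<in> Car"
    by (elim car_cases) (simp add: circ_eq car_iff tadd_cl tcirc_cl NA0 NB0 NC0)
next
  fix x y w assume "x \<in> Car" "y \<in> Car" "w \<in> Car"
  then show "circ (circ x y) w = circ x (circ y w)"
  proof (elim car_cases)
    fix a b c a' b' c' a'' b'' c''
    assume h: "a \<in> TA" "b \<in> TB" "c \<in> TC" "a' \<in> TA" "b' \<in> TB" "c' \<in> TC" "a'' \<in> TA" "b'' \<in> TB" "c'' \<in> TC"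
      and eqs: "x = (a, b, c)" "y = (a', b', c')" "w = (a'', b'', c'')"
    have "tup_add IB NB (tup_add IB NB b (\<alpha> c b')) (\<alpha> (tup_circ IC NB EB c c') b'')
        = tup_add IB NB b (\<alpha> c (tup_add IB NB b' (\<alpha> c' b'')))"
    proof -
      have "\<alpha> (tup_circ IC NB EB c c') b'' = \<alpha> c (\<alpha> c' b'')" using \<alpha>_comp h by simp
      moreover have "\<alpha> c (tup_add IB NB b' (\<alpha> c' b'')) = tup_add IB NB (\<alpha> c b') (\<alpha> c (\<alpha> c' b''))"
        using \<alpha>_add h \<alpha>_cl by simp
      ultimately show ?thesis using tadd_assoc[OF NB0] by simp
    qed
    then show ?thesis using eqs by (simp add: circ_eq tcirc_assoc NA0 NC0)
  qed
next
  fix x assume "x \<in> Car" then show "circ x br_zero = x"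
    by (elim car_cases) (simp add: circ_eq zero_eq tcirc_zr \<alpha>_zr tadd_zr NA0 NB0 NC0)
next
  fix x assume "x \<in> Car" then show "circ br_zero x = x"
  proof (elim car_cases)
    fix a b c assume h: "x = (a, b, c)" "a \<in> TA" "b \<in> TB" "c \<in> TC"
    have "tup_add IB NB (\<lambda>_. 0) b = b" using tadd_zr[OF NB0 h(3)] tadd_comm[OF NB0] by metis
    then show ?thesis using h by (simp add: circ_eq zero_eq tzr_circ NA0 NC0 \<alpha>_0)
  qed
next
  fix x assume "x \<in> Car" then show "\<exists>y\<in>Car. circ x y = br_zero \<and> circ y x = br_zero"
  proof (elim car_cases)
    fix a b c assume h: "x = (a, b, c)" "a \<in> TA" "b \<in> TB" "c \<in> TC"
    obtain a' where a': "a' \<in> TA" "tup_circ IA NA EA a a' = (\<lambda>_. 0)" "tup_circ IA NA EA a' a = (\<lambda>_. 0)"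
      using tcirc_inv[OF NA0 copEA h(2)] by blast
    obtain c' where c': "c' \<in> TC" "tup_circ IC NB EB c c' = (\<lambda>_. 0)" "tup_circ IC NB EB c' c = (\<lambda>_. 0)"
      using tcirc_inv[OF NC0 copEB h(4)] by blast
    define b' where "b' = tup_neg IB NB (\<alpha> c' b)"
    have b': "b' \<in> TB" using tneg_cl[OF NB0] b'_def by simp
    have cc: "\<alpha> c (\<alpha> c' b) = b" using \<alpha>_comp[OF h(4) c'(1) h(3)] c'(2) \<alpha>_0 h by simp
    have 1: "tup_add IB NB b (\<alpha> c b') = (\<lambda>_. 0)"
      unfolding b'_def using \<alpha>_neg[OF h(4) \<alpha>_cl[OF c'(1) h(3)]] cc tadd_neg NB0 by simp
    have 2: "tup_add IB NB b' (\<alpha> c' b) = (\<lambda>_. 0)"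
      unfolding b'_def by (subst tadd_comm') (rule tadd_neg[OF NB0])
    show ?thesis
      by (rule bexI[of _ "(a', b', c')"]) (use h a' c' b' 1 2 in \<open>simp_all add: circ_eq zero_eq car_iff\<close>)
  qed
next
  fix x y w assume "x \<in> Car" "y \<in> Car" "w \<in> Car"
  then show "circ x (add y w) = add (add (circ x y) (neg x)) (circ x w)"
  proof (elim car_cases)
    fix a b c a' b' c' a'' b'' c''
    assume h: "a \<in> TA" "b \<in> TB" "c \<in> TC" "a' \<in> TA" "b' \<in> TB" "c' \<in> TC" "a'' \<in> TA" "b'' \<in> TB" "c'' \<in> TC"
      and eqs: "x = (a, b, c)" "y = (a', b', c')" "w = (a'', b'', c'')"
    have "tup_add IB NB b (\<alpha> c (tup_add IB NB b' b''))
       = tup_add IB NB (tup_add IB NB (tup_add IB NB b (\<alpha> c b')) (tup_neg IB NB b)) (tup_add IB NB b (\<alpha> c b''))"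
    proof -
      have e: "\<alpha> c (tup_add IB NB b' b'') = tup_add IB NB (\<alpha> c b') (\<alpha> c b'')" using \<alpha>_add h by simp
      show ?thesis unfolding e by (rule tbrace_b)
    qed
    then show ?thesis using eqs by (simp add: circ_eq add_eq neg_eq tbrace NA0 NC0)
  qed
next
  show "\<exists>K. \<forall>x\<in>Car. neg x = (add x ^^ K) br_zero"
  proof (intro exI ballI)
    fix x assume "x \<in> Car"
    then show "neg x = (add x ^^ (PP - 1)) br_zero"
    proof (elim car_cases)
      fix a b c assume h: "x = (a, b, c)" "a \<in> TA" "b \<in> TB" "c \<in> TC"
      have d1: "\<forall>i\<in>IA. NA i dvd PP" unfolding PP_def
      proof
        fix i assume i: "i \<in> IA"
        have "NA i dvd (\<Prod>i\<in>IA. NA i)" by (rule dvd_prodI) (use i in auto)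
        then show "NA i dvd (\<Prod>i\<in>IA. NA i) * (\<Prod>i\<in>IB. NB i) * (\<Prod>i\<in>IC. NB i)"
          by (intro dvd_mult2)
      qed
      have d2: "\<forall>i\<in>IB. NB i dvd PP" unfolding PP_def
      proof
        fix i assume i: "i \<in> IB"
        have "NB i dvd (\<Prod>i\<in>IB. NB i)" by (rule dvd_prodI) (use i in auto)
        then show "NB i dvd (\<Prod>i\<in>IA. NA i) * (\<Prod>i\<in>IB. NB i) * (\<Prod>i\<in>IC. NB i)"
          by (rule dvd_mult2[OF dvd_mult])
      qed
      have d3: "\<forall>i\<in>IC. NB i dvd PP" unfolding PP_def
      proof
        fix i assume i: "i \<in> IC"
        have "NB i dvd (\<Prod>i\<in>IC. NB i)" by (rule dvd_prodI) (use i in auto)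
        then show "NB i dvd (\<Prod>i\<in>IA. NA i) * (\<Prod>i\<in>IB. NB i) * (\<Prod>i\<in>IC. NB i)"
          by (rule dvd_mult)
      qed
      have "(add x ^^ (PP - 1)) br_zero = ((tup_add IA NA a ^^ (PP - 1)) (\<lambda>_. 0),
         (tup_add IB NB b ^^ (PP - 1)) (\<lambda>_. 0), (tup_add IC NB c ^^ (PP - 1)) (\<lambda>_. 0))"
        using smul[OF \<open>x \<in> Car\<close>, of "PP - 1"] h(1) by simp
      also have "\<dots> = neg x" unfolding h(1) neg_eq
        using neg_pow_tup[OF NA0 _ h(2) d1 PP_pos] neg_pow_tup[OF NB0 _ h(3) d2 PP_pos]
        neg_pow_tup[OF NC0 _ h(4) d3 PP_pos] by simp
      finally show ?thesis by simp
    qed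
  qed
qed

end

lemma tmul_in: "i \<in> I \<Longrightarrow> tmul I N u x i = (u i * x i) mod int (N i)" by (simp add: tmul_def)
lemma tmul_out: "i \<notin> I \<Longrightarrow> tmul I N u x i = 0" by (simp add: tmul_def)

context setting begin

lemma tadd_neg_cancel: assumes "z \<in> tup_car I N" "\<forall>i\<in>I. N i > 0"
  shows "tup_add I N (tup_neg I N x) (tup_add I N x z) = z"
proof -
  have "tup_add I N (tup_neg I N x) (tup_add I N x z) = tup_add I N (tup_add I N x (tup_neg I N x)) z"
    using tadd_assoc[OF assms(2)] tadd_comm' by metis
  also have "\<dots> = z" using tadd_neg[OF assms(2)] tadd_zr[OF assms(2) assms(1)] tadd_comm' by metis
  finally show ?thesis .
qed

lemma lm_eq: assumes "(xa, xb, xc) \<in> Car" "(ya, yb, yc) \<in> Car"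
  shows "B.lm (xa, xb, xc) (ya, yb, yc) = (tup_lam IA NA EA xa ya, \<alpha> xc yb, tup_lam IC NB EB xc yc)"
proof -
  have h: "xa \<in> TA" "xb \<in> TB" "xc \<in> TC" "ya \<in> TA" "yb \<in> TB" "yc \<in> TC" using assms by (auto simp: car_iff)
  have 1: "lam (tup_add IA NA) (tup_neg IA NA) (tup_circ IA NA EA) xa ya = tup_lam IA NA EA xa ya"
    using tlam[OF NA0 h(1) h(4)] .
  have 2: "lam (tup_add IC NB) (tup_neg IC NB) (tup_circ IC NB EB) xc yc = tup_lam IC NB EB xc yc"
    using tlam[OF NC0 h(3) h(6)] .
  have 3: "tup_add IB NB (tup_neg IB NB xb) (tup_add IB NB xb (\<alpha> xc yb)) = \<alpha> xc yb"
    using tadd_neg_cancel[OF \<alpha>_cl[OF h(3) h(5)] NB0] .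
  show ?thesis using 1 2 3 unfolding lam_def by (simp add: add_eq neg_eq circ_eq)
qed

lemma \<alpha>_coord: assumes c: "c \<in> TC"
  shows "\<exists>w. \<forall>b\<in>TB. \<alpha> c b = tmul IB NB w b"
proof -
  have cop: "\<forall>i\<in>IB. \<forall>k\<in>IB. i \<noteq> k \<longrightarrow> coprime (NB i) (NB k)" using copBB by auto
  have N1: "\<forall>i\<in>IB. NB i > 1" using NB1 by auto
  define w where "w i = \<alpha> c (\<lambda>k. if k = i then 1 else 0) i" for i
  have "\<alpha> c b = tmul IB NB w b" if b: "b \<in> TB" for b
  proof
    fix i show "\<alpha> c b i = tmul IB NB w b i"
    proof (cases "i \<in> IB")
      case True
      show ?thesis using gcoord[of IB NB "\<alpha> c" b i] True b \<alpha>_cl[OF c] \<alpha>_add[OF c] cop N1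
        unfolding tup_car_gcar[symmetric] tup_add_gadd[symmetric] by (simp add: tmul_def w_def)
    next
      case False
      then show ?thesis using tcar_out[OF NB0 \<alpha>_cl[OF c b] False] tmul_out[OF False] by simp
    qed
  qed
  then show ?thesis by blast
qed

definition enc :: "belt \<Rightarrow> (nat + nat + nat \<Rightarrow> int)" where
  "enc x = (case x of (a, b, c) \<Rightarrow> case_sum a (case_sum b c))"
definition dec :: "(nat + nat + nat \<Rightarrow> int) \<Rightarrow> belt" where
  "dec y = (\<lambda>j. y (Inl j), \<lambda>j. y (Inr (Inl j)), \<lambda>j. y (Inr (Inr j)))"
definition JJ :: "(nat + nat + nat) set" where
  "JJ = Inl ` IA \<union> Inr ` (Inl ` IB \<union> Inr ` IC)"
definition NN :: "nat + nat + nat \<Rightarrow> nat" where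
  "NN = case_sum NA (case_sum NB NB)"

lemma dec_enc: "dec (enc x) = x"
  by (cases x) (simp add: enc_def dec_def)
lemma enc_dec: "enc (dec y) = y"
proof
  fix s show "enc (dec y) s = y s"
  proof (cases s)
    case (Inl j) then show ?thesis by (simp add: enc_def dec_def)
  next
    case (Inr t) then show ?thesis by (cases t) (simp_all add: enc_def dec_def)
  qed
qed

lemma enc_car: assumes "x \<in> Car" shows "enc x \<in> gcar JJ NN"
  using assms
proof (elim car_cases)
  fix a b c assume h: "x = (a, b, c)" "a \<in> TA" "b \<in> TB" "c \<in> TC"
  have e1: "enc x (Inl i) = a i" "enc x (Inr (Inl i)) = b i" "enc x (Inr (Inr i)) = c i" for i
    using h(1) by (simp_all add: enc_def)
  have P1: "\<forall>s\<in>JJ. 0 \<le> enc x s \<and> enc x s < int (NN s)"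
  proof
    fix s assume s: "s \<in> JJ"
    consider (A) i where "i \<in> IA" "s = Inl i" | (B) i where "i \<in> IB" "s = Inr (Inl i)"
      | (C) i where "i \<in> IC" "s = Inr (Inr i)" using s unfolding JJ_def by blast
    then show "0 \<le> enc x s \<and> enc x s < int (NN s)"
    proof cases
      case A then show ?thesis using tcar_rng[OF NA0 h(2)] e1 by (simp add: NN_def)
    next
      case B then show ?thesis using tcar_rng[OF NB0 h(3)] e1 by (simp add: NN_def)
    next
      case C then show ?thesis using tcar_rng[OF NC0 h(4)] e1 by (simp add: NN_def)
    qed
  qed
  have P2: "\<forall>s. s \<notin> JJ \<longrightarrow> enc x s = 0"
  proof (intro allI impI)
    fix s assume s: "s \<notin> JJ"
    show "enc x s = 0"
    proof (cases s)
      case (Inl i) then have "i \<notin> IA" using s by (auto simp: JJ_def)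
      then show ?thesis using tcar_out[OF NA0 h(2)] e1 Inl by simp
    next
      case (Inr t)
      show ?thesis
      proof (cases t)
        case (Inl i) then have "i \<notin> IB" using s Inr by (auto simp: JJ_def)
        then show ?thesis using tcar_out[OF NB0 h(3)] e1 Inl Inr by simp
      next
        case (Inr i) then have "i \<notin> IC" using s \<open>s = Inr t\<close> by (auto simp: JJ_def)
        then show ?thesis using tcar_out[OF NC0 h(4)] e1 Inr \<open>s = Inr t\<close> by simp
      qed
    qed
  qed
  show "enc x \<in> gcar JJ NN" unfolding gcar_def using P1 P2 by blast
qed

lemma dec_car: assumes "y \<in> gcar JJ NN" shows "dec y \<in> Car"
proof -
  have g1: "0 \<le> y s \<and> y s < int (NN s)" if "s \<in> JJ" for s using assms that by (simp add: gcar_def)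
  have g2: "y s = 0" if "s \<notin> JJ" for s using assms that by (simp add: gcar_def)
  have "(\<lambda>j. y (Inl j)) \<in> TA" unfolding tup_car_def
  proof (intro CollectI conjI ballI allI impI)
    fix i assume "i \<in> IA" then have "Inl i \<in> JJ" by (simp add: JJ_def)
    then show "0 \<le> y (Inl i)" "y (Inl i) < int (NA i)" using g1[of "Inl i"] by (simp_all add: NN_def)
  next
    fix i assume "i \<notin> IA" then have "Inl i \<notin> JJ" by (auto simp: JJ_def)
    then show "y (Inl i) = 0" using g2 by simp
  qed
  moreover have "(\<lambda>j. y (Inr (Inl j))) \<in> TB" unfolding tup_car_def
  proof (intro CollectI conjI ballI allI impI)
    fix i assume "i \<in> IB" then have "Inr (Inl i) \<in> JJ" by (simp add: JJ_def)
    then show "0 \<le> y (Inr (Inl i))" "y (Inr (Inl i)) < int (NB i)" using g1[of "Inr (Inl i)"] by (simp_all add: NN_def)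
  next
    fix i assume "i \<notin> IB" then have "Inr (Inl i) \<notin> JJ" by (auto simp: JJ_def)
    then show "y (Inr (Inl i)) = 0" using g2 by simp
  qed
  moreover have "(\<lambda>j. y (Inr (Inr j))) \<in> TC" unfolding tup_car_def
  proof (intro CollectI conjI ballI allI impI)
    fix i assume "i \<in> IC" then have "Inr (Inr i) \<in> JJ" by (simp add: JJ_def)
    then show "0 \<le> y (Inr (Inr i))" "y (Inr (Inr i)) < int (NB i)" using g1[of "Inr (Inr i)"] by (simp_all add: NN_def)
  next
    fix i assume "i \<notin> IC" then have "Inr (Inr i) \<notin> JJ" by (auto simp: JJ_def)
    then show "y (Inr (Inr i)) = 0" using g2 by simp
  qed
  ultimately show ?thesis by (simp add: dec_def car_iff)
qed

lemma enc_add: "enc (add x y) = gadd JJ NN (enc x) (enc y)"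
proof
  fix s
  obtain a b c where x: "x = (a, b, c)" by (cases x)
  obtain a' b' c' where y: "y = (a', b', c')" by (cases y)
  show "enc (add x y) s = gadd JJ NN (enc x) (enc y) s"
    unfolding x y add_eq
    by (cases s rule: sum.exhaust) (auto simp: enc_def gadd_def JJ_def NN_def tup_add_def image_iff split: sum.splits)
qed

lemma JJ_cop: "\<forall>s\<in>JJ. \<forall>k\<in>JJ. s \<noteq> k \<longrightarrow> coprime (NN s) (NN k)"
proof (intro ballI impI)
  fix s k assume s: "s \<in> JJ" and k: "k \<in> JJ" and sk: "s \<noteq> k"
  have BB: "coprime (NB i) (NB j)" if "i \<in> {1..r}" "j \<in> {1..r}" "i \<noteq> j" for i j
    using copBB that by blast
  have AB: "coprime (NA i) (NB j)" "coprime (NB j) (NA i)" if "i \<in> IA" "j \<in> {1..r}" for i j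
    using copAB that by (auto simp: coprime_commute)
  have AA: "coprime (NA i) (NA j)" if "i \<in> IA" "j \<in> IA" "i \<noteq> j" for i j
    using copAA that by blast
  consider (A) i where "i \<in> IA" "s = Inl i" | (B) i where "i \<in> IB" "s = Inr (Inl i)"
    | (C) i where "i \<in> IC" "s = Inr (Inr i)" using s unfolding JJ_def by blast
  then show "coprime (NN s) (NN k)"
  proof cases
    case A
    consider (A') j where "j \<in> IA" "k = Inl j" | (B') j where "j \<in> IB" "k = Inr (Inl j)"
      | (C') j where "j \<in> IC" "k = Inr (Inr j)" using k unfolding JJ_def by blast
    then show ?thesis
    proof cases
      case A' then show ?thesis using A AA sk by (simp add: NN_def)
    next
      case B' then show ?thesis using A AB by (simp add: NN_def)
    next
      case C' then show ?thesis using A AB mr by (simp add: NN_def)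
    qed
  next
    case B
    consider (A') j where "j \<in> IA" "k = Inl j" | (B') j where "j \<in> IB" "k = Inr (Inl j)"
      | (C') j where "j \<in> IC" "k = Inr (Inr j)" using k unfolding JJ_def by blast
    then show ?thesis
    proof cases
      case A' then show ?thesis using B AB by (simp add: NN_def)
    next
      case B' then show ?thesis using B BB sk by (simp add: NN_def)
    next
      case C' then show ?thesis using B BB mr by (simp add: NN_def)
    qed
  next
    case C
    consider (A') j where "j \<in> IA" "k = Inl j" | (B') j where "j \<in> IB" "k = Inr (Inl j)"
      | (C') j where "j \<in> IC" "k = Inr (Inr j)" using k unfolding JJ_def by blast
    then show ?thesis
    proof cases
      case A' then show ?thesis using C AB mr by (simp add: NN_def)
    next
      case B' then show ?thesis using C BB mr by (simp add: NN_def)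
    next
      case C' then show ?thesis using C BB sk mr by (simp add: NN_def)
    qed
  qed
qed

lemma coord:
  assumes cl: "\<forall>x\<in>Car. \<phi> x \<in> Car" and hom: "\<forall>x\<in>Car. \<forall>y\<in>Car. \<phi> (add x y) = add (\<phi> x) (\<phi> y)"
  shows "\<exists>uA uB uC. \<forall>a b c. (a, b, c) \<in> Car \<longrightarrow>
           \<phi> (a, b, c) = (tmul IA NA uA a, tmul IB NB uB b, tmul IC NB uC c)"
proof -
  define \<psi> where "\<psi> y = enc (\<phi> (dec y))" for y
  have finJ: "finite JJ" unfolding JJ_def by simp
  have N1: "\<forall>s\<in>JJ. NN s > 1" using NA1 NB1 mr unfolding JJ_def NN_def by auto
  have pcl: "\<forall>y\<in>gcar JJ NN. \<psi> y \<in> gcar JJ NN" using cl dec_car enc_car \<psi>_def by auto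
  have decadd: "dec (gadd JJ NN y1 y2) = add (dec y1) (dec y2)" for y1 y2
    using enc_add[of "dec y1" "dec y2"] enc_dec dec_enc by metis
  have phom: "\<forall>y1\<in>gcar JJ NN. \<forall>y2\<in>gcar JJ NN. \<psi> (gadd JJ NN y1 y2) = gadd JJ NN (\<psi> y1) (\<psi> y2)"
    using hom dec_car by (simp add: \<psi>_def decadd enc_add)
  define u where "u s = \<psi> (\<lambda>k. if k = s then 1 else 0) s" for s
  have key: "enc (\<phi> x) s = (u s * enc x s) mod int (NN s)" if x: "x \<in> Car" and s: "s \<in> JJ" for x s
    using gcoord[OF finJ N1 JJ_cop pcl phom enc_car[OF x] s] unfolding \<psi>_def dec_enc u_def by simp
  define uA where "uA j = u (Inl j)" for j
  define uB where "uB j = u (Inr (Inl j))" for j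
  define uC where "uC j = u (Inr (Inr j))" for j
  have "\<phi> (a, b, c) = (tmul IA NA uA a, tmul IB NB uB b, tmul IC NB uC c)" if x: "(a, b, c) \<in> Car" for a b c
  proof -
    obtain a' b' c' where ph: "\<phi> (a, b, c) = (a', b', c')" by (cases "\<phi> (a, b, c)")
    have h': "a' \<in> TA" "b' \<in> TB" "c' \<in> TC" using cl x ph car_iff by metis+
    have "a' = tmul IA NA uA a"
    proof
      fix j show "a' j = tmul IA NA uA a j"
      proof (cases "j \<in> IA")
        case True
        then have jj: "Inl j \<in> JJ" by (simp add: JJ_def)
        show ?thesis using key[OF x jj] True ph by (simp add: enc_def tmul_def uA_def NN_def)
      next
        case False then show ?thesis using tcar_out[OF _ _ False] h' NA0 NB0 NC0 tmul_out[OF False] by simp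
      qed
    qed
    moreover have "b' = tmul IB NB uB b"
    proof
      fix j show "b' j = tmul IB NB uB b j"
      proof (cases "j \<in> IB")
        case True
        then have jj: "Inr (Inl j) \<in> JJ" by (simp add: JJ_def)
        show ?thesis using key[OF x jj] True ph by (simp add: enc_def tmul_def uB_def NN_def)
      next
        case False then show ?thesis using tcar_out[OF _ _ False] h' NA0 NB0 NC0 tmul_out[OF False] by simp
      qed
    qed
    moreover have "c' = tmul IC NB uC c"
    proof
      fix j show "c' j = tmul IC NB uC c j"
      proof (cases "j \<in> IC")
        case True
        then have jj: "Inr (Inr j) \<in> JJ" by (simp add: JJ_def)
        show ?thesis using key[OF x jj] True ph by (simp add: enc_def tmul_def uC_def NN_def)
      next
        case False then show ?thesis using tcar_out[OF _ _ False] h' NA0 NB0 NC0 tmul_out[OF False] by simp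
      qed
    qed
    ultimately show ?thesis using ph by simp
  qed
  then show ?thesis by blast
qed

end

lemma soc1_iff: assumes N: "N > 1"
  shows "s \<in> soc1 N E \<longleftrightarrow> 0 \<le> s \<and> s < int N \<and> int N dvd int E * s"
proof
  assume s: "s \<in> soc1 N E"
  then have r: "0 \<le> s" "s < int N" by (auto simp: soc1_def)
  have bal: "\<forall>y\<in>{0..<int N}. (- s + (s + y + int E * s * y)) mod int N = y" using s by (simp add: soc1_def)
  have "1 \<in> {0..<int N}" using N by simp
  then have "(- s + (s + 1 + int E * s * 1)) mod int N = 1" using bal by blast
  then have "(1 + int E * s) mod int N = 1 mod int N" using N by simp
  then have "int N dvd (1 + int E * s) - 1" by (simp only: mod_eq_dvd_iff)
  then show "0 \<le> s \<and> s < int N \<and> int N dvd int E * s" using r by simp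
next
  assume h: "0 \<le> s \<and> s < int N \<and> int N dvd int E * s"
  have "(- s + (s + y + int E * s * y)) mod int N = y" if "y \<in> {0..<int N}" for y
  proof -
    obtain k where k: "int E * s = int N * k" using h by (auto elim: dvdE)
    have e: "- s + (s + y + int E * s * y) = y + (k * y) * int N" using k by (simp add: algebra_simps)
    have y: "0 \<le> y" "y < int N" using that by auto
    show ?thesis unfolding e mod_mult_self1 using y by (rule mod_pos_pos_trivial)
  qed
  then show "s \<in> soc1 N E" using h by (auto simp: soc1_def)
qed

lemma soc1_card: assumes q: "(q::nat) > 1" and t: "1 \<le> t" "t \<le> g"
  shows "card (soc1 (q ^ g) (q ^ t)) = q ^ t"
proof -
  define M where "M = q ^ (g - t)"
  have NM: "q ^ g = q ^ t * M" unfolding M_def using t by (simp add: power_add[symmetric])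
  have N: "q ^ g > 1" by (rule one_less_power) (use q t in auto)
  have M0: "M > 0" using q M_def by simp
  have qt0: "int (q ^ t) \<noteq> 0" using q by simp
  have eq: "soc1 (q ^ g) (q ^ t) = (\<lambda>k. int M * k) ` {0..<int (q ^ t)}"
  proof
    show "soc1 (q ^ g) (q ^ t) \<subseteq> (\<lambda>k. int M * k) ` {0..<int (q ^ t)}"
    proof
      fix s assume "s \<in> soc1 (q ^ g) (q ^ t)"
      then have h: "0 \<le> s" "s < int (q ^ g)" "int (q ^ g) dvd int (q ^ t) * s" using soc1_iff[OF N] by auto
      then have "int (q ^ t) * int M dvd int (q ^ t) * s" using NM by (metis of_nat_mult)
      then have "int M dvd s" using qt0 q by simp
      then obtain k where k: "s = int M * k" by (auto elim: dvdE)
      have "0 \<le> k" using h(1) k M0 by (simp add: zero_le_mult_iff)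
      moreover have "int M * k < int M * int (q ^ t)" using h(2) k NM by (simp add: algebra_simps)
      then have "k < int (q ^ t)" using M0 by simp
      ultimately show "s \<in> (\<lambda>k. int M * k) ` {0..<int (q ^ t)}" using k by auto
    qed
    show "(\<lambda>k. int M * k) ` {0..<int (q ^ t)} \<subseteq> soc1 (q ^ g) (q ^ t)"
    proof
      fix s assume "s \<in> (\<lambda>k. int M * k) ` {0..<int (q ^ t)}"
      then obtain k where k0: "k \<in> {0..<int (q ^ t)}" "s = int M * k" by blast
      then have k: "s = int M * k" "0 \<le> k" "k < int (q ^ t)" by (simp_all del: of_nat_power)
      have "0 \<le> s" using k M0 by simp
      moreover have "s < int (q ^ g)"
      proof -
        have "int M * k < int M * int (q ^ t)" using k M0 by simp
        then show ?thesis using k NM by (simp add: algebra_simps)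
      qed
      moreover have "int (q ^ g) dvd int (q ^ t) * s" using k NM by simp
      ultimately show "s \<in> soc1 (q ^ g) (q ^ t)" using soc1_iff[OF N] by auto
    qed
  qed
  have "inj_on (\<lambda>k. int M * k) {0..<int (q ^ t)}" using M0 by (auto simp: inj_on_def)
  then have "card (soc1 (q ^ g) (q ^ t)) = card {0..<int (q ^ t)}" unfolding eq by (rule card_image)
  then show ?thesis by (simp del: of_nat_power)
qed

lemma slot_soc:
  fixes u :: int and N E :: nat
  assumes N: "N > 1"
    and m: "(u * ((1 + 1 + int E * 1 * 1) mod int N)) mod int N
          = ((u * 1) mod int N + (u * 1) mod int N + int E * ((u * 1) mod int N) * ((u * 1) mod int N)) mod int N"
    and s: "(u * x) mod int N = 1"
  shows "coprime u (int N) \<and> int N dvd int E * (u - 1)"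
proof -
  have cop: "coprime u (int N)"
  proof (rule coprimeI)
    fix d assume "d dvd u" "d dvd int N"
    then have "d dvd (u * x) mod int N" by (simp add: dvd_mod)
    then show "is_unit d" using s by simp
  qed
  have "(u * (2 + int E)) mod int N = (u + u + int E * u * u) mod int N"
    using m unfolding circ_modL circ_modR
    by (simp add: mod_simps)
  then have "int N dvd (u + u + int E * u * u) - u * (2 + int E)"
    by (metis mod_eq_dvd_iff)
  moreover have "(u + u + int E * u * u) - u * (2 + int E) = u * (int E * (u - 1))"
    by (simp add: algebra_simps)
  ultimately have "int N dvd u * (int E * (u - 1))" by simp
  then have "int N dvd int E * (u - 1)" using cop by (simp add: coprime_commute coprime_dvd_mult_right_iff)
  then show ?thesis using cop by simp
qed

lemma emb_car: "\<forall>i\<in>I. N i > 0 \<Longrightarrow> j \<in> I \<Longrightarrow> 0 \<le> s \<Longrightarrow> s < int (N j) \<Longrightarrow> emb j s \<in> tup_car I N"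
  by (auto simp: emb_def tup_car_def)
lemma tmul_emb: "j \<in> I \<Longrightarrow> tmul I N u (emb j x) = emb j ((u j * x) mod int (N j))"
  by (auto simp: tmul_def emb_def fun_eq_iff)
lemma tmul_zero: "tmul I N u (\<lambda>_. 0) = (\<lambda>_. 0)"
  by (auto simp: tmul_def fun_eq_iff)
lemma tmul_comm: "tmul I N u (tmul I N w x) = tmul I N w (tmul I N u x)"
  by (auto simp: tmul_def fun_eq_iff mod_simps algebra_simps)
lemma tcirc_emb: "j \<in> I \<Longrightarrow> tup_circ I N E (emb j x) (emb j y) = emb j ((x + y + int (E j) * x * y) mod int (N j))"
  by (auto simp: tup_circ_def emb_def fun_eq_iff)
lemma tcirc_emb0: "j \<in> I \<Longrightarrow> 0 \<le> x \<Longrightarrow> x < int (N j) \<Longrightarrow> tup_circ I N E (emb j x) (\<lambda>_. 0) = emb j x"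
  by (auto simp: tup_circ_def emb_def fun_eq_iff)
lemma tcirc_00: "tup_circ I N E (\<lambda>_. 0) (\<lambda>_. 0) = (\<lambda>_. 0)"
  by (auto simp: tup_circ_def fun_eq_iff)
lemma tadd_0l: "x \<in> tup_car I N \<Longrightarrow> tup_add I N (\<lambda>_. 0) x = x"
  by (auto simp: tup_add_def fun_eq_iff tup_car_def)
lemma tadd_00: "tup_add I N (\<lambda>_. 0) (\<lambda>_. 0) = (\<lambda>_. 0)"
  by (auto simp: tup_add_def fun_eq_iff)

context setting begin

lemma unit_slot:
  fixes \<pi> :: "belt \<Rightarrow> int" and Nm :: nat
  assumes tcb: "transitive_cycle_base Car add neg br_zero circ T" and t: "t \<in> T"
    and lm\<mu>: "\<forall>x\<in>Car. \<forall>y\<in>Car. \<exists>\<mu>. \<pi> (B.lm x y) = (\<mu> * \<pi> y) mod int Nm"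
    and padd: "\<forall>x\<in>Car. \<forall>y\<in>Car. \<pi> (add x y) = (\<pi> x + \<pi> y) mod int Nm"
    and pneg: "\<forall>x\<in>Car. \<pi> (neg x) = (- \<pi> x) mod int Nm"
    and pz: "\<pi> br_zero = 0"
    and e: "e \<in> Car" "\<pi> e = 1"
  shows "coprime (\<pi> t) (int Nm)"
proof (rule coprimeI)
  fix d assume dt: "d dvd \<pi> t" and dN: "d dvd int Nm"
  obtain h where h: "h \<in> Car" "T = lam_orbit Car add neg circ h" and gen: "add_gen add neg br_zero T = Car"
    using tcb unfolding transitive_cycle_base_def by blast
  obtain x0 where x0: "x0 \<in> Car" "t = B.lm x0 h" using t h unfolding lam_orbit_def by blast
  have tC: "t \<in> Car" using x0 h B.lm_cl by auto
  have dm: "d dvd (\<mu> * z) mod int Nm" if "d dvd z" for \<mu> z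
    using that dN by (simp add: dvd_mod)
  have "h = B.lm (B.ci x0) t" using B.lm_ci_lm x0 h by simp
  moreover obtain \<mu> where "\<pi> (B.lm (B.ci x0) t) = (\<mu> * \<pi> t) mod int Nm" using lm\<mu> B.ci_cl x0 tC by blast
  ultimately have dh: "d dvd \<pi> h" using dm dt by simp
  have TS: "d dvd \<pi> s" if sT: "s \<in> T" for s
  proof -
    obtain x where x: "x \<in> Car" "s = B.lm x h" using sT h unfolding lam_orbit_def by blast
    obtain \<mu> where "\<pi> (B.lm x h) = (\<mu> * \<pi> h) mod int Nm" using lm\<mu> x h by blast
    then show ?thesis using x dm dh by simp
  qed
  have AG: "d dvd \<pi> y" if "y \<in> add_gen add neg br_zero T" for y
    using that
  proof (induction y rule: add_gen.induct)
    case zero then show ?case using pz by simp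
  next
    case (base s) then show ?case using TS by simp
  next
    case (plus x y)
    then have "x \<in> Car" "y \<in> Car" using gen by auto
    then show ?case using plus padd dN by (simp add: dvd_mod)
  next
    case (uminus x)
    then have "x \<in> Car" using gen by auto
    then show ?case using uminus pneg dN by (simp add: dvd_mod)
  qed
  have "e \<in> add_gen add neg br_zero T" using e gen by simp
  then have "d dvd \<pi> e" by (rule AG)
  then have "d dvd 1" using e(2) by simp
  then show "is_unit d" .
qed

lemma tcb_units:
  assumes tcb: "transitive_cycle_base Car add neg br_zero circ T" and t: "(ta, tb, tc) \<in> T"
  shows "(\<forall>j\<in>IA. coprime (ta j) (int (NA j))) \<and> (\<forall>j\<in>IB. coprime (tb j) (int (NB j)))
       \<and> (\<forall>j\<in>IC. coprime (tc j) (int (NB j)))"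
proof (intro conjI ballI)
  fix j assume j: "j \<in> IA"
  have jj: "Suc 0 \<le> j" "j \<le> v" using j by auto
  have N: "NA j > 1" using NA1 j by auto
  let ?e = "(emb j 1, (\<lambda>_. 0), (\<lambda>_. 0)) :: belt"
  have e: "?e \<in> Car" using emb_car[OF NA0 j, of 1] N tz[OF NB0] tz[OF NC0] by (simp add: car_iff)
  have "coprime ((\<lambda>x. fst x j) (ta, tb, tc)) (int (NA j))"
  proof (rule unit_slot[OF tcb t _ _ _ _ e])
    show "\<forall>x\<in>Car. \<forall>y\<in>Car. \<exists>\<mu>. fst (B.lm x y) j = (\<mu> * fst y j) mod int (NA j)"
    proof (intro ballI)
      fix x y assume "x \<in> Car" "y \<in> Car"
      then show "\<exists>\<mu>. fst (B.lm x y) j = (\<mu> * fst y j) mod int (NA j)"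
        by (elim car_cases) (auto simp: lm_eq car_iff tup_lam_def j jj)
    qed
    show "\<forall>x\<in>Car. \<forall>y\<in>Car. fst (add x y) j = (fst x j + fst y j) mod int (NA j)"
      by (auto elim!: car_cases simp: add_eq tup_add_def j jj)
    show "\<forall>x\<in>Car. fst (neg x) j = (- fst x j) mod int (NA j)"
      by (auto elim!: car_cases simp: neg_eq tup_neg_def j jj)
    show "fst br_zero j = 0" by (simp add: zero_eq)
    show "fst ?e j = 1" by (simp add: emb_def)
  qed
  then show "coprime (ta j) (int (NA j))" by simp
next
  fix j assume j: "j \<in> IB"
  have jj: "Suc m \<le> j" "j \<le> r" using j by auto
  have N: "NB j > 1" using NB1 j by auto
  let ?e = "((\<lambda>_. 0), emb j 1, (\<lambda>_. 0)) :: belt"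
  have e: "?e \<in> Car" using emb_car[OF NB0 j, of 1] N tz[OF NA0] tz[OF NC0] by (simp add: car_iff)
  have "coprime ((\<lambda>x. fst (snd x) j) (ta, tb, tc)) (int (NB j))"
  proof (rule unit_slot[OF tcb t _ _ _ _ e])
    show "\<forall>x\<in>Car. \<forall>y\<in>Car. \<exists>\<mu>. fst (snd (B.lm x y)) j = (\<mu> * fst (snd y) j) mod int (NB j)"
    proof (intro ballI)
      fix x y assume "x \<in> Car" "y \<in> Car"
      then show "\<exists>\<mu>. fst (snd (B.lm x y)) j = (\<mu> * fst (snd y) j) mod int (NB j)"
      proof (elim car_cases)
        fix xa xb xc ya yb yc
        assume h: "x = (xa, xb, xc)" "xa \<in> TA" "xb \<in> TB" "xc \<in> TC" "y = (ya, yb, yc)" "ya \<in> TA" "yb \<in> TB" "yc \<in> TC"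
        obtain w where w: "\<forall>b\<in>TB. \<alpha> xc b = tmul IB NB w b" using \<alpha>_coord[OF h(4)] by blast
        have "fst (snd (B.lm x y)) j = \<alpha> xc yb j" using h lm_eq car_iff by simp
        also have "\<dots> = (w j * yb j) mod int (NB j)" using w h(7) j by (simp add: tmul_def)
        finally show ?thesis using h by auto
      qed
    qed
    show "\<forall>x\<in>Car. \<forall>y\<in>Car. fst (snd (add x y)) j = (fst (snd x) j + fst (snd y) j) mod int (NB j)"
      by (auto elim!: car_cases simp: add_eq tup_add_def j jj)
    show "\<forall>x\<in>Car. fst (snd (neg x)) j = (- fst (snd x) j) mod int (NB j)"
      by (auto elim!: car_cases simp: neg_eq tup_neg_def j jj)
    show "fst (snd br_zero) j = 0" by (simp add: zero_eq)
    show "fst (snd ?e) j = 1" by (simp add: emb_def)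
  qed
  then show "coprime (tb j) (int (NB j))" by simp
next
  fix j assume j: "j \<in> IC"
  have jj: "Suc 0 \<le> j" "j \<le> m" using j by auto
  have N: "NB j > 1" using NB1 j mr by auto
  let ?e = "((\<lambda>_. 0), (\<lambda>_. 0), emb j 1) :: belt"
  have e: "?e \<in> Car" using emb_car[OF NC0 j, of 1] N tz[OF NA0] tz[OF NB0] by (simp add: car_iff)
  have "coprime ((\<lambda>x. snd (snd x) j) (ta, tb, tc)) (int (NB j))"
  proof (rule unit_slot[OF tcb t _ _ _ _ e])
    show "\<forall>x\<in>Car. \<forall>y\<in>Car. \<exists>\<mu>. snd (snd (B.lm x y)) j = (\<mu> * snd (snd y) j) mod int (NB j)"
    proof (intro ballI)
      fix x y assume "x \<in> Car" "y \<in> Car"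
      then show "\<exists>\<mu>. snd (snd (B.lm x y)) j = (\<mu> * snd (snd y) j) mod int (NB j)"
        by (elim car_cases) (auto simp: lm_eq car_iff tup_lam_def j jj)
    qed
    show "\<forall>x\<in>Car. \<forall>y\<in>Car. snd (snd (add x y)) j = (snd (snd x) j + snd (snd y) j) mod int (NB j)"
      by (auto elim!: car_cases simp: add_eq tup_add_def j jj)
    show "\<forall>x\<in>Car. snd (snd (neg x)) j = (- snd (snd x) j) mod int (NB j)"
      by (auto elim!: car_cases simp: neg_eq tup_neg_def j jj)
    show "snd (snd br_zero) j = 0" by (simp add: zero_eq)
    show "snd (snd ?e) j = 1" by (simp add: emb_def)
  qed
  then show "coprime (tc j) (int (NB j))" by simp
qed

end

lemma fin_eq: "((1 + E * w) * ((u * a) mod N)) mod N = ((1 + (u - 1) mod N) * (1 + E * w) * a) mod (N::int)"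
proof -
  have 1: "((1 + E * w) * ((u * a) mod N)) mod N = ((1 + E * w) * (u * a)) mod N"
    by (rule mod_mult_right_eq)
  have "[(1 + (u - 1) mod N) * (1 + E * w) * a = (1 + (u - 1)) * (1 + E * w) * a] (mod N)"
    by (intro cong_mult cong_add cong_refl) (simp add: cong_def)
  then have 2: "((1 + (u - 1) mod N) * (1 + E * w) * a) mod N = ((1 + (u - 1)) * (1 + E * w) * a) mod N"
    unfolding cong_def .
  have 3: "(1 + E * w) * (u * a) = (1 + (u - 1)) * (1 + E * w) * a" by (simp add: algebra_simps)
  show ?thesis unfolding 1 2 3 ..
qed

lemma soc_from: assumes N: "N > 1" and d: "int N dvd int E * (u - 1)"
  shows "(u - 1) mod int N \<in> soc1 N E"
proof -
  have "(int E * ((u - 1) mod int N)) mod int N = (int E * (u - 1)) mod int N" by (rule mod_mult_right_eq)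
  also have "\<dots> = 0" using d by simp
  finally have "int N dvd int E * ((u - 1) mod int N)" by (simp add: dvd_eq_mod_eq_0)
  moreover have "0 \<le> (u - 1) mod int N" "(u - 1) mod int N < int N" using N by simp_all
  ultimately show ?thesis using soc1_iff[OF N] by simp
qed

context setting begin

lemma forward:
  assumes g: "(a, b, c) \<in> Car" and g': "(a', b', c') \<in> Car"
    and tcb: "transitive_cycle_base Car add neg br_zero circ T" and gT: "(a, b, c) \<in> T"
    and iso: "cycle_set_iso Car (B.cop (a, b, c)) (B.cop (a', b', c'))"
  shows "(\<forall>j\<in>IA. \<exists>s\<in>soc1 (NA j) (EA j). \<exists>a''\<in>{0..<int (NA j)}.
        a' j = ((1 + s) * (1 + int (EA j) * a'') * a j) mod int (NA j))
   \<and> (\<forall>j\<in>IC. \<exists>s\<in>soc1 (NB j) (EB j). \<exists>a''\<in>{0..<int (NB j)}.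
        (\<forall>z\<in>TB. \<alpha> (emb j s) z = z) \<and>
        c' j = ((1 + s) * (1 + int (EB j) * a'') * c j) mod int (NB j))"
proof -
  obtain \<phi> e0 where aut: "B.aut \<phi>" and e0: "e0 \<in> Car" and phg: "\<phi> (a, b, c) = B.lm e0 (a', b', c')"
    using B.iso_imp_aut[OF tcb gT g' iso] by blast
  have phC: "\<forall>x\<in>Car. \<phi> x \<in> Car" using aut B.aut_cl by blast
  have phadd: "\<forall>x\<in>Car. \<forall>y\<in>Car. \<phi> (add x y) = add (\<phi> x) (\<phi> y)" using aut unfolding B.aut_def by blast
  have phmul: "\<phi> (circ x y) = circ (\<phi> x) (\<phi> y)" if "x \<in> Car" "y \<in> Car" for x y
    using aut that unfolding B.aut_def by blast
  have phsurj: "\<exists>x\<in>Car. \<phi> x = y" if "y \<in> Car" for y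
  proof -
    have "y \<in> \<phi> ` Car" using aut that unfolding B.aut_def bij_betw_def by simp
    then show ?thesis by (metis imageE)
  qed
  obtain uA uB uC where U: "\<forall>a b c. (a, b, c) \<in> Car \<longrightarrow>
      \<phi> (a, b, c) = (tmul IA NA uA a, tmul IB NB uB b, tmul IC NB uC c)"
    using coord[OF phC phadd] by blast
  define w where "w = B.ci e0"
  have wC: "w \<in> Car" using B.ci_cl e0 w_def by simp
  obtain wa wb wc where wabc: "w = (wa, wb, wc)" "wa \<in> TA" "wb \<in> TB" "wc \<in> TC"
    using wC by (elim car_cases)
  have g'eq: "(a', b', c') = B.lm w (\<phi> (a, b, c))" using phg B.lm_ci_lm e0 g' w_def by simp
  have hA: "a \<in> TA" "b \<in> TB" "c \<in> TC" using g car_iff by auto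
  have phg2: "\<phi> (a, b, c) = (tmul IA NA uA a, tmul IB NB uB b, tmul IC NB uC c)" using U g by blast
  have tmc: "(tmul IA NA uA a, tmul IB NB uB b, tmul IC NB uC c) \<in> Car"
    using tmul_cl[OF NA0] tmul_cl[OF NB0] tmul_cl[OF NC0] car_iff by simp
  have lmw: "B.lm w (\<phi> (a, b, c)) = (tup_lam IA NA EA wa (tmul IA NA uA a), \<alpha> wc (tmul IB NB uB b),
      tup_lam IC NB EB wc (tmul IC NB uC c))"
    unfolding phg2 wabc(1) by (rule lm_eq) (use wC wabc tmc in auto)
  have a'eq: "a' = tup_lam IA NA EA wa (tmul IA NA uA a)" and c'eq: "c' = tup_lam IC NB EB wc (tmul IC NB uC c)"
    using g'eq lmw by simp_all
  have z0: "(\<lambda>_. 0) \<in> TA" "(\<lambda>_. 0) \<in> TB" "(\<lambda>_. 0) \<in> TC" using tz NA0 NB0 NC0 by auto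
  have partA: "\<forall>j\<in>IA. \<exists>s\<in>soc1 (NA j) (EA j). \<exists>a''\<in>{0..<int (NA j)}.
        a' j = ((1 + s) * (1 + int (EA j) * a'') * a j) mod int (NA j)"
  proof
    fix j assume j: "j \<in> IA"
    have N: "NA j > 1" using NA1 j by auto
    let ?ej = "(emb j 1, (\<lambda>_. 0), (\<lambda>_. 0)) :: belt"
    have ej: "?ej \<in> Car" using emb_car[OF NA0 j, of 1] N z0 by (simp add: car_iff)
    define X where "X = (1 + 1 + int (EA j) * 1 * 1) mod int (NA j)"
    have cee: "circ ?ej ?ej = (emb j X, (\<lambda>_. 0), (\<lambda>_. 0))"
      using tcirc_emb[OF j, of NA EA 1 1] \<alpha>_zr[OF z0(3)] tadd_00 tcirc_00 by (simp add: circ_eq X_def)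
    have ceeC: "(emb j X, (\<lambda>_. 0), (\<lambda>_. 0)) \<in> Car"
      using emb_car[OF NA0 j, of X] N z0 by (simp add: car_iff X_def)
    have "\<phi> (circ ?ej ?ej) = (emb j ((uA j * X) mod int (NA j)), (\<lambda>_. 0), (\<lambda>_. 0))"
      unfolding cee using U ceeC tmul_emb[OF j] tmul_zero by simp
    moreover have "\<phi> ?ej = (emb j ((uA j * 1) mod int (NA j)), (\<lambda>_. 0), (\<lambda>_. 0))"
      using U ej tmul_emb[OF j] tmul_zero by simp
    ultimately have "(emb j ((uA j * X) mod int (NA j)), (\<lambda>_. 0), (\<lambda>_. 0)) =
        circ (emb j ((uA j * 1) mod int (NA j)), (\<lambda>_. 0), (\<lambda>_. 0)) (emb j ((uA j * 1) mod int (NA j)), (\<lambda>_. 0), (\<lambda>_. 0))"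
      using phmul[OF ej ej] by simp
    then have "emb j ((uA j * X) mod int (NA j)) = tup_circ IA NA EA (emb j ((uA j * 1) mod int (NA j))) (emb j ((uA j * 1) mod int (NA j)))"
      by (simp add: circ_eq)
    then have "emb j ((uA j * X) mod int (NA j)) j = emb j (((uA j * 1) mod int (NA j) + (uA j * 1) mod int (NA j)
       + int (EA j) * ((uA j * 1) mod int (NA j)) * ((uA j * 1) mod int (NA j))) mod int (NA j)) j"
      using tcirc_emb[OF j] by simp
    then have m: "(uA j * ((1 + 1 + int (EA j) * 1 * 1) mod int (NA j))) mod int (NA j)
          = ((uA j * 1) mod int (NA j) + (uA j * 1) mod int (NA j) + int (EA j) * ((uA j * 1) mod int (NA j)) * ((uA j * 1) mod int (NA j))) mod int (NA j)"
      by (simp add: emb_def X_def)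
    obtain x where x: "x \<in> Car" "\<phi> x = ?ej" using phsurj[OF ej] by blast
    obtain xa xb xc where xabc: "x = (xa, xb, xc)" "xa \<in> TA" "xb \<in> TB" "xc \<in> TC" using x(1) by (elim car_cases)
    have "tmul IA NA uA xa = emb j 1" using x xabc U by simp
    then have "tmul IA NA uA xa j = 1" by (simp add: emb_def)
    then have s1: "(uA j * xa j) mod int (NA j) = 1" using j by (simp add: tmul_def)
    have sc: "coprime (uA j) (int (NA j)) \<and> int (NA j) dvd int (EA j) * (uA j - 1)"
      by (rule slot_soc[OF N m s1])
    define s where "s = (uA j - 1) mod int (NA j)"
    have sS: "s \<in> soc1 (NA j) (EA j)" unfolding s_def using soc_from[OF N] sc by simp
    have wr: "wa j \<in> {0..<int (NA j)}" using tcar_rng[OF NA0 wabc(2) j] by simp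
    have "a' j = ((1 + int (EA j) * wa j) * ((uA j * a j) mod int (NA j))) mod int (NA j)"
      using a'eq j by (simp add: tup_lam_def tmul_def)
    also have "\<dots> = ((1 + s) * (1 + int (EA j) * wa j) * a j) mod int (NA j)"
      unfolding s_def by (rule fin_eq)
    finally show "\<exists>s\<in>soc1 (NA j) (EA j). \<exists>a''\<in>{0..<int (NA j)}.
        a' j = ((1 + s) * (1 + int (EA j) * a'') * a j) mod int (NA j)" using sS wr by blast
  qed
  have partC: "\<forall>j\<in>IC. \<exists>s\<in>soc1 (NB j) (EB j). \<exists>a''\<in>{0..<int (NB j)}.
        (\<forall>z\<in>TB. \<alpha> (emb j s) z = z) \<and>
        c' j = ((1 + s) * (1 + int (EB j) * a'') * c j) mod int (NB j)"
  proof
    fix j assume j: "j \<in> IC"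
    have N: "NB j > 1" using NB1 j mr by auto
    let ?ej = "((\<lambda>_. 0), (\<lambda>_. 0), emb j 1) :: belt"
    have e1: "emb j 1 \<in> TC" using emb_car[OF NC0 j, of 1] N by simp
    have ej: "?ej \<in> Car" using e1 z0 by (simp add: car_iff)
    define X where "X = (1 + 1 + int (EB j) * 1 * 1) mod int (NB j)"
    have cee: "circ ?ej ?ej = ((\<lambda>_. 0), (\<lambda>_. 0), emb j X)"
      using tcirc_emb[OF j, of NB EB 1 1] \<alpha>_zr[OF e1] tadd_00 tcirc_00 by (simp add: circ_eq X_def)
    have ceeC: "((\<lambda>_. 0), (\<lambda>_. 0), emb j X) \<in> Car"
      using emb_car[OF NC0 j, of X] N z0 by (simp add: car_iff X_def)
    have "\<phi> (circ ?ej ?ej) = ((\<lambda>_. 0), (\<lambda>_. 0), emb j ((uC j * X) mod int (NB j)))"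
      unfolding cee using U ceeC tmul_emb[OF j] tmul_zero by simp
    moreover have phej: "\<phi> ?ej = ((\<lambda>_. 0), (\<lambda>_. 0), emb j ((uC j * 1) mod int (NB j)))"
      using U ej tmul_emb[OF j] tmul_zero by simp
    ultimately have "((\<lambda>_. 0), (\<lambda>_. 0), emb j ((uC j * X) mod int (NB j))) =
        circ ((\<lambda>_. 0), (\<lambda>_. 0), emb j ((uC j * 1) mod int (NB j))) ((\<lambda>_. 0), (\<lambda>_. 0), emb j ((uC j * 1) mod int (NB j)))"
      using phmul[OF ej ej] by simp
    then have "emb j ((uC j * X) mod int (NB j)) = tup_circ IC NB EB (emb j ((uC j * 1) mod int (NB j))) (emb j ((uC j * 1) mod int (NB j)))"
      by (simp add: circ_eq)
    then have "emb j ((uC j * X) mod int (NB j)) j = emb j (((uC j * 1) mod int (NB j) + (uC j * 1) mod int (NB j)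
       + int (EB j) * ((uC j * 1) mod int (NB j)) * ((uC j * 1) mod int (NB j))) mod int (NB j)) j"
      using tcirc_emb[OF j] by simp
    then have m: "(uC j * ((1 + 1 + int (EB j) * 1 * 1) mod int (NB j))) mod int (NB j)
          = ((uC j * 1) mod int (NB j) + (uC j * 1) mod int (NB j) + int (EB j) * ((uC j * 1) mod int (NB j)) * ((uC j * 1) mod int (NB j))) mod int (NB j)"
      by (simp add: emb_def X_def)
    obtain x where x: "x \<in> Car" "\<phi> x = ?ej" using phsurj[OF ej] by blast
    obtain xa xb xc where xabc: "x = (xa, xb, xc)" "xa \<in> TA" "xb \<in> TB" "xc \<in> TC" using x(1) by (elim car_cases)
    have "tmul IC NB uC xc = emb j 1" using x xabc U by simp
    then have "tmul IC NB uC xc j = 1" by (simp add: emb_def)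
    then have s1: "(uC j * xc j) mod int (NB j) = 1" using j by (simp add: tmul_def)
    have sc: "coprime (uC j) (int (NB j)) \<and> int (NB j) dvd int (EB j) * (uC j - 1)"
      by (rule slot_soc[OF N m s1])
    define s where "s = (uC j - 1) mod int (NB j)"
    have sS: "s \<in> soc1 (NB j) (EB j)" unfolding s_def using soc_from[OF N] sc by simp
    have sr: "0 \<le> s" "s < int (NB j)" using N s_def by simp_all
    have Es: "int (NB j) dvd int (EB j) * s" using sS soc1_iff[OF N] by simp
    have es: "emb j s \<in> TC" using emb_car[OF NC0 j sr] .
    define u' where "u' = (uC j * 1) mod int (NB j)"
    have u'r: "0 \<le> u'" "u' < int (NB j)" using N u'_def by simp_all
    have eu: "emb j u' \<in> TC" using emb_car[OF NC0 j u'r] .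
    have KEY: "tmul IB NB uB (\<alpha> (emb j 1) z) = \<alpha> (emb j u') (tmul IB NB uB z)" if z: "z \<in> TB" for z
    proof -
      let ?yz = "((\<lambda>_. 0), z, (\<lambda>_. 0)) :: belt"
      have yz: "?yz \<in> Car" using z z0 by (simp add: car_iff)
      have az: "\<alpha> (emb j 1) z \<in> TB" using \<alpha>_cl[OF e1 z] .
      have c1: "circ ?ej ?yz = ((\<lambda>_. 0), \<alpha> (emb j 1) z, emb j 1)"
        using tcirc_00 tadd_0l[OF az] tcirc_emb0[OF j, of 1 NB EB] N by (simp add: circ_eq)
      have c1C: "((\<lambda>_. 0), \<alpha> (emb j 1) z, emb j 1) \<in> Car" using az e1 z0 by (simp add: car_iff)
      have "\<phi> (circ ?ej ?yz) = ((\<lambda>_. 0), tmul IB NB uB (\<alpha> (emb j 1) z), emb j u')"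
        unfolding c1 using U c1C tmul_emb[OF j] tmul_zero u'_def by simp
      moreover have "\<phi> ?yz = ((\<lambda>_. 0), tmul IB NB uB z, (\<lambda>_. 0))" using U yz tmul_zero by simp
      moreover have "\<phi> ?ej = ((\<lambda>_. 0), (\<lambda>_. 0), emb j u')" using phej u'_def by simp
      ultimately have "((\<lambda>_. 0), tmul IB NB uB (\<alpha> (emb j 1) z), emb j u')
          = circ ((\<lambda>_. 0), (\<lambda>_. 0), emb j u') ((\<lambda>_. 0), tmul IB NB uB z, (\<lambda>_. 0))"
        using phmul[OF ej yz] by simp
      then have "tmul IB NB uB (\<alpha> (emb j 1) z) = tup_add IB NB (\<lambda>_. 0) (\<alpha> (emb j u') (tmul IB NB uB z))"
        by (simp add: circ_eq)
      also have "\<dots> = \<alpha> (emb j u') (tmul IB NB uB z)"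
        using tadd_0l \<alpha>_cl[OF eu tmul_cl[OF NB0]] by simp
      finally show ?thesis .
    qed
    obtain w1 where w1: "\<forall>v\<in>TB. \<alpha> (emb j 1) v = tmul IB NB w1 v" using \<alpha>_coord[OF e1] by blast
    have K2: "\<alpha> (emb j 1) z' = \<alpha> (emb j u') z'" if z': "z' \<in> TB" for z'
    proof -
      have "((\<lambda>_. 0), z', (\<lambda>_. 0)) \<in> Car" using z' z0 by (simp add: car_iff)
      then obtain y where y: "y \<in> Car" "\<phi> y = ((\<lambda>_. 0), z', (\<lambda>_. 0))" using phsurj by blast
      obtain ya yb yc where yabc: "y = (ya, yb, yc)" "ya \<in> TA" "yb \<in> TB" "yc \<in> TC" using y(1) by (elim car_cases)
      have zz: "tmul IB NB uB yb = z'" using y yabc U by simp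
      have "\<alpha> (emb j 1) z' = tmul IB NB w1 (tmul IB NB uB yb)" using w1 z' zz by simp
      also have "\<dots> = tmul IB NB uB (tmul IB NB w1 yb)" by (rule tmul_comm)
      also have "\<dots> = tmul IB NB uB (\<alpha> (emb j 1) yb)" using w1 yabc by simp
      also have "\<dots> = \<alpha> (emb j u') (tmul IB NB uB yb)" using KEY yabc by simp
      finally show ?thesis using zz by simp
    qed
    have ec: "emb j u' = tup_circ IC NB EB (emb j 1) (emb j s)"
    proof -
      obtain k where k: "int (EB j) * s = int (NB j) * k" using Es by (auto elim: dvdE)
      have "(1 + s + int (EB j) * 1 * s) mod int (NB j) = (1 + s + k * int (NB j)) mod int (NB j)"
        using k by (simp add: algebra_simps)
      also have "\<dots> = (1 + s) mod int (NB j)" by (rule mod_mult_self1)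
      also have "\<dots> = (1 + (uC j - 1)) mod int (NB j)" unfolding s_def by (simp add: mod_simps)
      also have "\<dots> = u'" unfolding u'_def by simp
      finally show ?thesis using tcirc_emb[OF j, of NB EB 1 s] by simp
    qed
    have kern: "\<forall>z\<in>TB. \<alpha> (emb j s) z = z"
    proof
      fix z assume z: "z \<in> TB"
      have "\<alpha> (emb j 1) (\<alpha> (emb j s) z) = \<alpha> (emb j 1) z"
        using \<alpha>_comp[OF e1 es z] ec K2[OF z] by simp
      then show "\<alpha> (emb j s) z = z" using \<alpha>_inj[OF e1] \<alpha>_cl[OF es z] z unfolding inj_on_def by blast
    qed
    have wr: "wc j \<in> {0..<int (NB j)}" using tcar_rng[OF NC0 wabc(4) j] by simp
    have "c' j = ((1 + int (EB j) * wc j) * ((uC j * c j) mod int (NB j))) mod int (NB j)"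
      using c'eq j by (simp add: tup_lam_def tmul_def)
    also have "\<dots> = ((1 + s) * (1 + int (EB j) * wc j) * c j) mod int (NB j)"
      unfolding s_def by (rule fin_eq)
    finally show "\<exists>s\<in>soc1 (NB j) (EB j). \<exists>a''\<in>{0..<int (NB j)}.
        (\<forall>z\<in>TB. \<alpha> (emb j s) z = z) \<and> c' j = ((1 + s) * (1 + int (EB j) * a'') * c j) mod int (NB j)"
      using sS wr kern by blast
  qed
  show ?thesis using partA partC by blast
qed

end

lemma tmul_add: "tmul I N u (tup_add I N x y) = tup_add I N (tmul I N u x) (tmul I N u y)"
  by (auto simp: tmul_def tup_add_def fun_eq_iff mod_simps algebra_simps)

lemma tmul_circ: assumes "\<forall>j\<in>I. int (N j) dvd int (E j) * (u j - 1)"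
  shows "tmul I N u (tup_circ I N E x y) = tup_circ I N E (tmul I N u x) (tmul I N u y)"
proof
  fix j show "tmul I N u (tup_circ I N E x y) j = tup_circ I N E (tmul I N u x) (tmul I N u y) j"
  proof (cases "j \<in> I")
    case True
    obtain k where k: "int (E j) * (u j - 1) = int (N j) * k" using assms True by (auto elim: dvdE)
    have 1: "(u j * ((x j + y j + int (E j) * x j * y j) mod int (N j))) mod int (N j)
        = (u j * (x j + y j + int (E j) * x j * y j)) mod int (N j)" by (rule mod_mult_right_eq)
    have 2: "((u j * x j) mod int (N j) + (u j * y j) mod int (N j) + int (E j) * ((u j * x j) mod int (N j)) * ((u j * y j) mod int (N j))) mod int (N j)
        = (u j * x j + u j * y j + int (E j) * (u j * x j) * (u j * y j)) mod int (N j)"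
      unfolding cong_def[symmetric] by (intro cong_add cong_mult cong_refl) (simp_all add: cong_def)
    have 3: "u j * x j + u j * y j + int (E j) * (u j * x j) * (u j * y j)
        = u j * (x j + y j + int (E j) * x j * y j) + (k * (u j * x j * y j)) * int (N j)"
    proof -
      have "int (E j) * (u j * x j) * (u j * y j) = int (E j) * u j * x j * y j + (int (E j) * (u j - 1)) * (u j * x j * y j)"
        by (simp add: algebra_simps)
      also have "\<dots> = int (E j) * u j * x j * y j + (int (N j) * k) * (u j * x j * y j)"
        by (simp only: k)
      finally show ?thesis by (simp add: algebra_simps)
    qed
    show ?thesis using True unfolding tmul_def tup_circ_def by (simp only: if_True 1 2 3 mod_mult_self1)
  next
    case False then show ?thesis by (simp add: tmul_def tup_circ_def)
  qed
qed

lemma tmul_inv: assumes "\<forall>j\<in>I. [u j * u' j = 1] (mod int (N j))" "x \<in> tup_car I N"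
  shows "tmul I N u' (tmul I N u x) = x"
proof
  fix j show "tmul I N u' (tmul I N u x) j = x j"
  proof (cases "j \<in> I")
    case True
    have "(u' j * ((u j * x j) mod int (N j))) mod int (N j) = ((u j * u' j) * x j) mod int (N j)"
      by (simp add: mod_mult_right_eq algebra_simps)
    also have "\<dots> = (1 * x j) mod int (N j)" using assms(1) True unfolding cong_def
      by (metis mod_mult_left_eq)
    also have "\<dots> = x j" using assms(2) True by (simp add: tup_car_def)
    finally show ?thesis using True by (simp add: tmul_def)
  next
    case False then show ?thesis using assms(2) by (simp add: tmul_def tup_car_def)
  qed
qed

lemma unit_inv: assumes "coprime u (int N)" shows "\<exists>u'. [u * u' = 1] (mod int N)"
  using cong_solve_coprime_int[OF assms] by blast

context setting begin

definition RR :: "nat set \<Rightarrow> (nat \<Rightarrow> int) \<Rightarrow> (nat \<Rightarrow> int)" where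
  "RR S c = (\<lambda>i. if i \<in> S then c i else 0)"

lemma RR_car: "S \<subseteq> IC \<Longrightarrow> c \<in> TC \<Longrightarrow> RR S c \<in> TC"
  by (auto simp: RR_def tup_car_def)

lemma RR_insert: assumes "j \<in> IC" "j \<notin> S" "S \<subseteq> IC" "c \<in> TC"
  shows "RR (insert j S) c = tup_circ IC NB EB (emb j (c j)) (RR S c)"
proof
  fix i show "RR (insert j S) c i = tup_circ IC NB EB (emb j (c j)) (RR S c) i"
    using assms tcar_rng[OF NC0 assms(4)] by (auto simp: RR_def tup_circ_def emb_def)
qed

lemma kern_mult: assumes j: "j \<in> IC" and sS: "s \<in> soc1 (NB j) (EB j)"
  and ker: "\<forall>z\<in>TB. \<alpha> (emb j s) z = z"
  shows "\<forall>z\<in>TB. \<alpha> (emb j ((s * int n) mod int (NB j))) z = z"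
proof (induction n)
  case 0
  have "emb j ((s * int 0) mod int (NB j)) = (\<lambda>_. 0)" by (simp add: emb_def fun_eq_iff)
  then show ?case using \<alpha>_0 by simp
next
  case (Suc n)
  have N: "NB j > 1" using NB1 j mr by auto
  have sr: "0 \<le> s" "s < int (NB j)" and Es: "int (NB j) dvd int (EB j) * s" using sS soc1_iff[OF N] by auto
  obtain k where k: "int (EB j) * s = int (NB j) * k" using Es by (auto elim: dvdE)
  have es: "emb j s \<in> TC" using emb_car[OF NC0 j sr] .
  have en: "emb j ((s * int n) mod int (NB j)) \<in> TC" using emb_car[OF NC0 j] N by simp
  define X where "X = (s * int n) mod int (NB j)"
  have e1: "int (EB j) * s * X = (k * X) * int (NB j)"
  proof -
    have "int (EB j) * s * X = (int (NB j) * k) * X" by (simp only: k)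
    then show ?thesis by (simp add: algebra_simps)
  qed
  have "(s + (s * int n) mod int (NB j) + int (EB j) * s * ((s * int n) mod int (NB j))) mod int (NB j)
      = (s + X + (k * X) * int (NB j)) mod int (NB j)"
    unfolding X_def[symmetric] e1 ..
  also have "\<dots> = (s + X) mod int (NB j)" by (rule mod_mult_self1)
  also have "\<dots> = (s + s * int n) mod int (NB j)" unfolding X_def by (rule mod_add_right_eq)
  also have "\<dots> = (s * int (Suc n)) mod int (NB j)" by (simp add: algebra_simps)
  finally have "emb j ((s * int (Suc n)) mod int (NB j)) = tup_circ IC NB EB (emb j s) (emb j ((s * int n) mod int (NB j)))"
    using tcirc_emb[OF j] by simp
  then show ?case using \<alpha>_comp[OF es en] Suc ker \<alpha>_cl[OF en] by simp
qed

lemma kern_single: assumes j: "j \<in> IC" and sS: "s \<in> soc1 (NB j) (EB j)"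
  and ker: "\<forall>z\<in>TB. \<alpha> (emb j s) z = z" and x: "0 \<le> x" "x < int (NB j)" and z: "z \<in> TB"
  shows "\<alpha> (emb j (((1 + s) * x) mod int (NB j))) z = \<alpha> (emb j x) z"
proof -
  have N: "NB j > 1" using NB1 j mr by auto
  obtain w where w: "[(1 + int (EB j) * x) * w = 1] (mod int (NB j))"
    using cong_solve_coprime_int copEB j by blast
  define n where "n = nat ((x * w) mod int (NB j))"
  have nn: "int n = (x * w) mod int (NB j)" using N n_def by simp
  define \<kappa> where "\<kappa> = (s * int n) mod int (NB j)"
  have ex: "emb j x \<in> TC" using emb_car[OF NC0 j x] .
  have ek: "emb j \<kappa> \<in> TC" using emb_car[OF NC0 j] N \<kappa>_def by simp
  have "(x + \<kappa> + int (EB j) * x * \<kappa>) mod int (NB j) = (x + s * ((x * w) * (1 + int (EB j) * x))) mod int (NB j)"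
    unfolding \<kappa>_def nn unfolding cong_def[symmetric]
    by (rule cong_trans[of _ "x + s * (x * w) + int (EB j) * x * (s * (x * w))"])
       ((intro cong_add cong_mult cong_refl; simp add: cong_def mod_simps), simp add: algebra_simps)
  also have "\<dots> = (x + s * x * ((1 + int (EB j) * x) * w)) mod int (NB j)" by (simp add: algebra_simps)
  also have "\<dots> = (x + s * x * 1) mod int (NB j)"
    using w unfolding cong_def by (metis mod_add_right_eq mod_mult_right_eq)
  also have "\<dots> = ((1 + s) * x) mod int (NB j)" by (simp add: algebra_simps)
  finally have "emb j (((1 + s) * x) mod int (NB j)) = tup_circ IC NB EB (emb j x) (emb j \<kappa>)"
    using tcirc_emb[OF j] by simp
  then show ?thesis using \<alpha>_comp[OF ex ek z] kern_mult[OF j sS ker] z \<kappa>_def by simp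
qed

lemma kern_all:
  assumes sS: "\<forall>j\<in>IC. s j \<in> soc1 (NB j) (EB j)" and ker: "\<forall>j\<in>IC. \<forall>z\<in>TB. \<alpha> (emb j (s j)) z = z"
    and c: "c \<in> TC"
  shows "\<forall>z\<in>TB. \<alpha> (tmul IC NB (\<lambda>j. 1 + s j) c) z = \<alpha> c z"
proof -
  let ?u = "\<lambda>j. 1 + s j"
  have tc: "tmul IC NB ?u c \<in> TC" using tmul_cl[OF NC0] .
  have "\<forall>z\<in>TB. \<alpha> (RR S (tmul IC NB ?u c)) z = \<alpha> (RR S c) z" if "S \<subseteq> IC" for S
  proof -
    have "finite S" using that finite_subset by blast
    then show ?thesis using that
    proof (induction S rule: finite_induct)
      case empty
      have "RR {} d = (\<lambda>_. 0)" for d by (simp add: RR_def fun_eq_iff)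
      then show ?case by simp
    next
      case (insert j S)
      have j: "j \<in> IC" and S: "S \<subseteq> IC" using insert by auto
      have r1: "RR S (tmul IC NB ?u c) \<in> TC" "RR S c \<in> TC" using RR_car S tc c by auto
      have cj: "0 \<le> c j" "c j < int (NB j)" using tcar_rng[OF NC0 c j] by auto
      have ecj: "emb j (c j) \<in> TC" using emb_car[OF NC0 j cj] .
      have N: "NB j > 1" using NB1 j mr by auto
      have etj: "emb j (tmul IC NB ?u c j) \<in> TC" using emb_car[OF NC0 j] N j by (simp add: tmul_def)
      show ?case
      proof
        fix z assume z: "z \<in> TB"
        have "\<alpha> (RR (insert j S) (tmul IC NB ?u c)) z
            = \<alpha> (emb j (tmul IC NB ?u c j)) (\<alpha> (RR S (tmul IC NB ?u c)) z)"
          using RR_insert[OF j insert(2) S tc] \<alpha>_comp[OF etj r1(1) z] by simp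
        also have "\<dots> = \<alpha> (emb j (tmul IC NB ?u c j)) (\<alpha> (RR S c) z)" using insert(3) S z by simp
        also have "\<dots> = \<alpha> (emb j (c j)) (\<alpha> (RR S c) z)"
          using kern_single[OF j _ _ cj \<alpha>_cl[OF r1(2) z]] sS ker j by (simp add: tmul_def)
        also have "\<dots> = \<alpha> (RR (insert j S) c) z"
          using RR_insert[OF j insert(2) S c] \<alpha>_comp[OF ecj r1(2) z] by simp
        finally show "\<alpha> (RR (insert j S) (tmul IC NB ?u c)) z = \<alpha> (RR (insert j S) c) z" .
      qed
    qed
  qed
  moreover have "RR IC d = d" if "d \<in> TC" for d using that by (auto simp: RR_def fun_eq_iff tup_car_def)
  ultimately show ?thesis using tc c by (metis order_refl)
qed

end

lemma cop_factor: assumes "coprime ((u * Y) mod int N) (int N)" shows "coprime u (int N)"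
proof (rule coprimeI)
  fix d assume "d dvd u" "d dvd int N"
  then have "d dvd (u * Y) mod int N" by (simp add: dvd_mod)
  then show "is_unit d" using assms \<open>d dvd int N\<close> by (meson coprime_common_divisor)
qed

context setting begin

lemma backward:
  assumes g: "(a, b, c) \<in> Car" and g': "(a', b', c') \<in> Car"
    and T1: "transitive_cycle_base Car add neg br_zero circ T1" "(a, b, c) \<in> T1"
    and T2: "transitive_cycle_base Car add neg br_zero circ T2" "(a', b', c') \<in> T2"
    and HA: "\<forall>j\<in>IA. \<exists>s\<in>soc1 (NA j) (EA j). \<exists>a''\<in>{0..<int (NA j)}.
        a' j = ((1 + s) * (1 + int (EA j) * a'') * a j) mod int (NA j)"
    and HC: "\<forall>j\<in>IC. \<exists>s\<in>soc1 (NB j) (EB j). \<exists>a''\<in>{0..<int (NB j)}.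
        (\<forall>z\<in>TB. \<alpha> (emb j s) z = z) \<and>
        c' j = ((1 + s) * (1 + int (EB j) * a'') * c j) mod int (NB j)"
  shows "cycle_set_iso Car (B.cop (a, b, c)) (B.cop (a', b', c'))"
proof -
  have "\<forall>j\<in>IA. \<exists>p. fst p \<in> soc1 (NA j) (EA j) \<and> snd p \<in> {0..<int (NA j)} \<and>
        a' j = ((1 + fst p) * (1 + int (EA j) * snd p) * a j) mod int (NA j)"
    using HA by (metis fst_conv snd_conv)
  then obtain pA where pA: "\<forall>j\<in>IA. fst (pA j) \<in> soc1 (NA j) (EA j) \<and> snd (pA j) \<in> {0..<int (NA j)} \<and>
        a' j = ((1 + fst (pA j)) * (1 + int (EA j) * snd (pA j)) * a j) mod int (NA j)"
    by (metis bchoice)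
  have "\<forall>j\<in>IC. \<exists>p. fst p \<in> soc1 (NB j) (EB j) \<and> snd p \<in> {0..<int (NB j)} \<and>
        (\<forall>z\<in>TB. \<alpha> (emb j (fst p)) z = z) \<and>
        c' j = ((1 + fst p) * (1 + int (EB j) * snd p) * c j) mod int (NB j)"
    using HC by (metis fst_conv snd_conv)
  then obtain pC where pC: "\<forall>j\<in>IC. fst (pC j) \<in> soc1 (NB j) (EB j) \<and> snd (pC j) \<in> {0..<int (NB j)} \<and>
        (\<forall>z\<in>TB. \<alpha> (emb j (fst (pC j))) z = z) \<and>
        c' j = ((1 + fst (pC j)) * (1 + int (EB j) * snd (pC j)) * c j) mod int (NB j)"
    by (metis bchoice)
  define sA where "sA j = fst (pA j)" for j
  define aA where "aA j = snd (pA j)" for j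
  define sC where "sC j = fst (pC j)" for j
  define aC where "aC j = snd (pC j)" for j
  have hA: "a \<in> TA" "b \<in> TB" "c \<in> TC" using g car_iff by auto
  have hA': "a' \<in> TA" "b' \<in> TB" "c' \<in> TC" using g' car_iff by auto
  define za where "za = (\<lambda>i. if i \<in> IA then aA i else 0)"
  define zc where "zc = (\<lambda>i. if i \<in> IC then aC i else 0)"
  have za: "za \<in> TA" using pA unfolding za_def aA_def tup_car_def by auto
  have zc: "zc \<in> TC" using pC unfolding zc_def aC_def tup_car_def by auto
  define z :: belt where "z = (za, (\<lambda>_. 0), zc)"
  have zC: "z \<in> Car" using za zc tz[OF NB0] by (simp add: z_def car_iff)
  define h where "h = B.lm z (a, b, c)"
  have heq: "h = (tup_lam IA NA EA za a, \<alpha> zc b, tup_lam IC NB EB zc c)"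
    unfolding h_def z_def by (rule lm_eq) (use zC g in \<open>auto simp: z_def\<close>)
  have hT1: "h \<in> T1"
  proof -
    obtain h0 where h0: "h0 \<in> Car" "T1 = lam_orbit Car add neg circ h0"
      using T1(1) unfolding transitive_cycle_base_def by blast
    obtain x0 where x0: "x0 \<in> Car" "(a, b, c) = B.lm x0 h0" using T1(2) h0 unfolding lam_orbit_def by blast
    have "h = B.lm (circ z x0) h0" unfolding h_def x0(2) using B.lm_circ zC x0 h0 by simp
    then show ?thesis using h0 B.circ_cl zC x0 unfolding lam_orbit_def by blast
  qed
  have hbu: "\<forall>j\<in>IB. coprime (\<alpha> zc b j) (int (NB j))"
    using tcb_units[OF T1(1)] hT1 heq by metis
  have g'u: "(\<forall>j\<in>IA. coprime (a' j) (int (NA j))) \<and> (\<forall>j\<in>IB. coprime (b' j) (int (NB j)))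
       \<and> (\<forall>j\<in>IC. coprime (c' j) (int (NB j)))"
    using tcb_units[OF T2] .
  have "\<forall>j\<in>IB. \<exists>v. [\<alpha> zc b j * v = 1] (mod int (NB j))" using hbu unit_inv by blast
  then obtain vB where vB: "\<forall>j\<in>IB. [\<alpha> zc b j * vB j = 1] (mod int (NB j))" by (metis bchoice)
  define uA where "uA j = 1 + sA j" for j
  define uB where "uB j = b' j * vB j" for j
  define uC where "uC j = 1 + sC j" for j
  have uAc: "coprime (uA j) (int (NA j))" if j: "j \<in> IA" for j
  proof -
    have "a' j = ((1 + sA j) * ((1 + int (EA j) * aA j) * a j)) mod int (NA j)"
      using pA j unfolding sA_def aA_def by (simp add: algebra_simps)
    then show ?thesis using g'u j cop_factor unfolding uA_def by metis
  qed
  have uCc: "coprime (uC j) (int (NB j))" if j: "j \<in> IC" for j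
  proof -
    have "c' j = ((1 + sC j) * ((1 + int (EB j) * aC j) * c j)) mod int (NB j)"
      using pC j unfolding sC_def aC_def by (simp add: algebra_simps)
    then show ?thesis using g'u j cop_factor unfolding uC_def by metis
  qed
  have uBc: "coprime (uB j) (int (NB j))" if j: "j \<in> IB" for j
  proof -
    have "coprime (vB j) (int (NB j))"
    proof (rule coprimeI)
      fix d assume "d dvd vB j" "d dvd int (NB j)"
      then have "d dvd (\<alpha> zc b j * vB j) mod int (NB j)" by (simp add: dvd_mod)
      moreover have "(\<alpha> zc b j * vB j) mod int (NB j) = 1 mod int (NB j)" using vB j unfolding cong_def by blast
      moreover have "NB j > 1" using NB1 j by auto
      ultimately show "is_unit d" by simp
    qed
    then show ?thesis using g'u j unfolding uB_def by simp
  qed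
  have "\<forall>j\<in>IA. \<exists>v. [uA j * v = 1] (mod int (NA j))" using uAc unit_inv by blast
  then obtain iA where iA: "\<forall>j\<in>IA. [uA j * iA j = 1] (mod int (NA j))" by (metis bchoice)
  have "\<forall>j\<in>IB. \<exists>v. [uB j * v = 1] (mod int (NB j))" using uBc unit_inv by blast
  then obtain iB where iB: "\<forall>j\<in>IB. [uB j * iB j = 1] (mod int (NB j))" by (metis bchoice)
  have "\<forall>j\<in>IC. \<exists>v. [uC j * v = 1] (mod int (NB j))" using uCc unit_inv by blast
  then obtain iC where iC: "\<forall>j\<in>IC. [uC j * iC j = 1] (mod int (NB j))" by (metis bchoice)
  have iA': "\<forall>j\<in>IA. [iA j * uA j = 1] (mod int (NA j))" using iA by (simp add: mult.commute)
  have iB': "\<forall>j\<in>IB. [iB j * uB j = 1] (mod int (NB j))" using iB by (simp add: mult.commute)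
  have iC': "\<forall>j\<in>IC. [iC j * uC j = 1] (mod int (NB j))" using iC by (simp add: mult.commute)
  define \<psi> where "\<psi> x = (tmul IA NA uA (fst x), tmul IB NB uB (fst (snd x)), tmul IC NB uC (snd (snd x)))" for x
  define \<psi>' where "\<psi>' x = (tmul IA NA iA (fst x), tmul IB NB iB (fst (snd x)), tmul IC NB iC (snd (snd x)))" for x
  have psC: "\<psi> x \<in> Car" for x unfolding \<psi>_def using tmul_cl NA0 NB0 NC0 car_iff by (cases x) simp
  have ps'C: "\<psi>' x \<in> Car" for x unfolding \<psi>'_def using tmul_cl NA0 NB0 NC0 car_iff by (cases x) simp
  have bij: "bij_betw \<psi> Car Car"
  proof (rule bij_betw_byWitness[where f'=\<psi>'])
    show "\<forall>x\<in>Car. \<psi>' (\<psi> x) = x"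
      by (auto elim!: car_cases simp: \<psi>_def \<psi>'_def tmul_inv iA iB iC)
    show "\<forall>y\<in>Car. \<psi> (\<psi>' y) = y"
      by (auto elim!: car_cases simp: \<psi>_def \<psi>'_def tmul_inv iA' iB' iC')
    show "\<psi> ` Car \<subseteq> Car" using psC by auto
    show "\<psi>' ` Car \<subseteq> Car" using ps'C by auto
  qed
  have psadd: "\<psi> (add x y) = add (\<psi> x) (\<psi> y)" for x y
    by (cases x, cases y) (simp add: \<psi>_def add_eq tmul_add)
  have dA: "\<forall>j\<in>IA. int (NA j) dvd int (EA j) * (uA j - 1)"
    using pA soc1_iff NA1 unfolding uA_def sA_def by auto
  have dC: "\<forall>j\<in>IC. int (NB j) dvd int (EB j) * (uC j - 1)"
  proof
    fix j assume j: "j \<in> IC"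
    have N: "NB j > 1" using NB1 j mr by auto
    have "fst (pC j) \<in> soc1 (NB j) (EB j)" using pC j by blast
    then show "int (NB j) dvd int (EB j) * (uC j - 1)" using soc1_iff[OF N] unfolding uC_def sC_def by simp
  qed
  have kern: "\<forall>z\<in>TB. \<alpha> (tmul IC NB uC y) z = \<alpha> y z" if "y \<in> TC" for y
    unfolding uC_def using kern_all[of sC y] pC that unfolding sC_def by blast
  have psmul: "\<psi> (circ x y) = circ (\<psi> x) (\<psi> y)" if "x \<in> Car" "y \<in> Car" for x y
    using that
  proof (elim car_cases)
    fix xa xb xc ya yb yc
    assume h: "x = (xa, xb, xc)" "xa \<in> TA" "xb \<in> TB" "xc \<in> TC" "y = (ya, yb, yc)" "ya \<in> TA" "yb \<in> TB" "yc \<in> TC"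
    obtain w where w: "\<forall>v\<in>TB. \<alpha> xc v = tmul IB NB w v" using \<alpha>_coord[OF h(4)] by blast
    have "tmul IB NB uB (tup_add IB NB xb (\<alpha> xc yb)) = tup_add IB NB (tmul IB NB uB xb) (tmul IB NB uB (\<alpha> xc yb))"
      by (rule tmul_add)
    also have "tmul IB NB uB (\<alpha> xc yb) = tmul IB NB uB (tmul IB NB w yb)" using w h by simp
    also have "\<dots> = tmul IB NB w (tmul IB NB uB yb)" by (rule tmul_comm)
    also have "\<dots> = \<alpha> xc (tmul IB NB uB yb)" using w tmul_cl[OF NB0] by simp
    also have "\<dots> = \<alpha> (tmul IC NB uC xc) (tmul IB NB uB yb)" using kern[OF h(4)] tmul_cl[OF NB0] by simp
    finally have bb: "tmul IB NB uB (tup_add IB NB xb (\<alpha> xc yb))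
       = tup_add IB NB (tmul IB NB uB xb) (\<alpha> (tmul IC NB uC xc) (tmul IB NB uB yb))" .
    show ?thesis using h bb tmul_circ[OF dA] tmul_circ[OF dC] by (simp add: \<psi>_def circ_eq)
  qed
  have aut: "B.aut \<psi>" unfolding B.aut_def using bij psadd psmul by blast
  have hC: "h \<in> Car" unfolding h_def using B.lm_cl zC g by simp
  have psh: "\<psi> h = (a', b', c')"
  proof -
    have 1: "tmul IA NA uA (tup_lam IA NA EA za a) = a'"
    proof
      fix j show "tmul IA NA uA (tup_lam IA NA EA za a) j = a' j"
      proof (cases "j \<in> IA")
        case True
        have zj: "za j = aA j" using True za_def by simp
        have "(uA j * (((1 + int (EA j) * za j) * a j) mod int (NA j))) mod int (NA j)
           = (uA j * ((1 + int (EA j) * za j) * a j)) mod int (NA j)" by (rule mod_mult_right_eq)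
        also have "\<dots> = ((1 + sA j) * (1 + int (EA j) * aA j) * a j) mod int (NA j)"
          unfolding uA_def zj by (simp add: algebra_simps)
        finally have "(uA j * (((1 + int (EA j) * za j) * a j) mod int (NA j))) mod int (NA j)
           = ((1 + sA j) * (1 + int (EA j) * aA j) * a j) mod int (NA j)" .
        then show ?thesis using True pA unfolding sA_def aA_def by (simp add: tmul_def tup_lam_def)
      next
        case False then show ?thesis using tcar_out[OF NA0 hA'(1) False] tmul_out[OF False] by simp
      qed
    qed
    have 3: "tmul IC NB uC (tup_lam IC NB EB zc c) = c'"
    proof
      fix j show "tmul IC NB uC (tup_lam IC NB EB zc c) j = c' j"
      proof (cases "j \<in> IC")
        case True
        have zj: "zc j = aC j" using True zc_def by simp
        have "(uC j * (((1 + int (EB j) * zc j) * c j) mod int (NB j))) mod int (NB j)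
           = (uC j * ((1 + int (EB j) * zc j) * c j)) mod int (NB j)" by (rule mod_mult_right_eq)
        also have "\<dots> = ((1 + sC j) * (1 + int (EB j) * aC j) * c j) mod int (NB j)"
          unfolding uC_def zj by (simp add: algebra_simps)
        finally have "(uC j * (((1 + int (EB j) * zc j) * c j) mod int (NB j))) mod int (NB j)
           = ((1 + sC j) * (1 + int (EB j) * aC j) * c j) mod int (NB j)" .
        then show ?thesis using True pC unfolding sC_def aC_def by (simp add: tmul_def tup_lam_def)
      next
        case False then show ?thesis using tcar_out[OF NC0 hA'(3) False] tmul_out[OF False] by simp
      qed
    qed
    have 2: "tmul IB NB uB (\<alpha> zc b) = b'"
    proof
      fix j show "tmul IB NB uB (\<alpha> zc b) j = b' j"
      proof (cases "j \<in> IB")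
        case True
        have "(uB j * \<alpha> zc b j) mod int (NB j) = (b' j * (\<alpha> zc b j * vB j)) mod int (NB j)"
          unfolding uB_def by (simp add: algebra_simps)
        also have "\<dots> = (b' j * 1) mod int (NB j)" using vB True unfolding cong_def
          by (metis mod_mult_right_eq)
        also have "\<dots> = b' j" using tcar_rng[OF NB0 hA'(2) True] by simp
        finally show ?thesis using True by (simp add: tmul_def)
      next
        case False then show ?thesis using tcar_out[OF NB0 hA'(2) False] tmul_out[OF False] by simp
      qed
    qed
    show ?thesis unfolding heq \<psi>_def using 1 2 3 by simp
  qed
  have i1: "cycle_set_iso Car (B.cop (a, b, c)) (B.cop h)" unfolding h_def by (rule B.iso_lm[OF zC g])
  have i2: "cycle_set_iso Car (B.cop h) (B.cop (\<psi> h))" by (rule B.iso_aut[OF aut hC])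
  show ?thesis using B.iso_trans[OF i1 i2] psh by simp
qed

end

lemma cop_1pow: assumes q: "prime (q::nat)" and t: "1 \<le> t"
  shows "coprime (1 + int (q ^ t) * z) (int (q ^ g))"
proof -
  have "coprime (1 + int (q ^ t) * z) (int q)"
  proof (rule coprimeI)
    fix d assume d1: "d dvd 1 + int (q ^ t) * z" and d2: "d dvd int q"
    have "int q dvd int (q ^ t)" using t by (simp add: dvd_power)
    then have "d dvd int (q ^ t) * z" using d2 by (meson dvd_mult2 dvd_trans)
    then have "d dvd (1 + int (q ^ t) * z) - int (q ^ t) * z" using d1 by (rule dvd_diff[rotated])
    then show "is_unit d" by simp
  qed
  then show ?thesis by (simp add: of_nat_power)
qed

lemma cop_pp: assumes "prime (p::nat)" "prime q" "p \<noteq> q" shows "coprime (p ^ a) (q ^ b)"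
proof -
  have "coprime p q" using primes_coprime assms by blast
  then show ?thesis by simp
qed

theorem mainTheorem13:
  fixes v m r :: nat
    and q p \<gamma> \<beta> tA tB d f :: "nat \<Rightarrow> nat"
    and \<alpha> :: "(nat \<Rightarrow> int) \<Rightarrow> (nat \<Rightarrow> int) \<Rightarrow> (nat \<Rightarrow> int)"
    and a b c a' b' c' :: "nat \<Rightarrow> int"
    and NA EA NB EB :: "nat \<Rightarrow> nat"
    and Car :: "belt set" and add :: "belt \<Rightarrow> belt \<Rightarrow> belt" and neg :: "belt \<Rightarrow> belt"
    and circ :: "belt \<Rightarrow> belt \<Rightarrow> belt"
  defines "NA \<equiv> (\<lambda>i. q i ^ \<gamma> i)" and "EA \<equiv> (\<lambda>i. q i ^ tA i)"
    and "NB \<equiv> (\<lambda>j. p j ^ \<beta> j)" and "EB \<equiv> (\<lambda>j. p j ^ tB j)"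
    and "Car \<equiv> br_car v m r NA NB" and "add \<equiv> br_add v m r NA NB"
    and "neg \<equiv> br_neg v m r NA NB" and "circ \<equiv> br_circ v m r NA EA NB EB \<alpha>"
  assumes mr: "m \<le> r"
    and q_prime: "\<forall>i\<in>{1..v}. prime (q i) \<and> odd (q i)"
    and p_prime: "\<forall>j\<in>{1..r}. prime (p j) \<and> odd (p j)"
    and q_inj: "inj_on q {1..v}"
    and p_mono: "\<forall>i\<in>{1..r}. \<forall>j\<in>{1..r}. i < j \<longrightarrow> p i < p j"
    and qp_disj: "q ` {1..v} \<inter> p ` {1..r} = {}"
    and tA_rng: "\<forall>i\<in>{1..v}. 1 \<le> tA i \<and> tA i \<le> \<gamma> i"
    and tB_rng: "\<forall>j\<in>{1..m}. 1 \<le> tB j \<and> tB j \<le> \<beta> j"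
    and \<beta>_pos: "\<forall>j\<in>{m+1..r}. 1 \<le> \<beta> j"
    and \<alpha>_aut: "\<forall>x\<in>tup_car {1..m} NB. add_aut {m+1..r} NB (\<alpha> x)"
    and \<alpha>_hom: "\<forall>x\<in>tup_car {1..m} NB. \<forall>y\<in>tup_car {1..m} NB. \<forall>z\<in>tup_car {m+1..r} NB.
                  \<alpha> (tup_circ {1..m} NB EB x y) z = \<alpha> x (\<alpha> y z)"
    and \<alpha>_nontriv_dom: "\<forall>i\<in>{1..m}. \<exists>s\<in>{0..<int (NB i)}. \<exists>z\<in>tup_car {m+1..r} NB.
                  \<alpha> (emb i s) z \<noteq> z"
    and \<alpha>_nontriv_img: "\<forall>i\<in>{m+1..r}. \<exists>x\<in>tup_car {1..m} NB. \<exists>s\<in>{0..<int (NB i)}.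
                  \<alpha> x (emb i s) \<noteq> emb i s"
    and d_def: "\<forall>j\<in>{1..v}. card (soc1 (NA j) (EA j)) = q j ^ d j"
    and f_def: "\<forall>j\<in>{1..m}. card (soc1 (NB j) (EB j)) = p j ^ f j"
    and g1: "(a, b, c) \<in> Car"
    and g2: "(a', b', c') \<in> Car"
    and tcb1: "\<exists>T. transitive_cycle_base Car add neg br_zero circ T \<and> (a, b, c) \<in> T"
    and tcb2: "\<exists>T. transitive_cycle_base Car add neg br_zero circ T \<and> (a', b', c') \<in> T"
  shows "cycle_set_iso Car (uc_cycle_op Car add neg br_zero circ (a, b, c))
                           (uc_cycle_op Car add neg br_zero circ (a', b', c'))
     \<longleftrightarrow>
     (\<forall>j\<in>{1..v}. \<exists>s\<in>soc1 (NA j) (EA j). \<exists>a''\<in>{0..<int (NA j)}.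
        a' j = ((1 + s) * (1 + int (q j ^ d j) * a'') * a j) mod int (NA j))
   \<and> (\<forall>j\<in>{1..m}. \<exists>s\<in>soc1 (NB j) (EB j). \<exists>a''\<in>{0..<int (NB j)}.
        (\<forall>z\<in>tup_car {m+1..r} NB. \<alpha> (emb j s) z = z) \<and>
        c' j = ((1 + s) * (1 + int (p j ^ f j) * a'') * c j) mod int (NB j))"

proof -
  have q1: "q i > 1" if "i \<in> {1..v}" for i using q_prime that prime_gt_1_nat by blast
  have p1: "p j > 1" if "j \<in> {1..r}" for j using p_prime that prime_gt_1_nat by blast
  have \<beta>1: "1 \<le> \<beta> j" if "j \<in> {1..r}" for j
  proof (cases "j \<le> m")
    case True
    then have "j \<in> {1..m}" using that by auto
    then have "1 \<le> tB j \<and> tB j \<le> \<beta> j" using tB_rng by blast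
    then show ?thesis by linarith
  next
    case False
    then have "j \<in> {m+1..r}" using that by auto
    then show ?thesis using \<beta>_pos by blast
  qed
  have ST: "setting v m r NA EA NB EB \<alpha>"
  proof
    show "m \<le> r" by (rule mr)
    show "\<forall>i\<in>{1..v}. 1 < NA i"
    proof
      fix i assume i: "i \<in> {1..v}"
      have "1 \<le> \<gamma> i" using tA_rng i by fastforce
      then show "1 < NA i" unfolding NA_def by (intro one_less_power q1[OF i]) simp
    qed
    show "\<forall>j\<in>{1..r}. 1 < NB j"
    proof
      fix j assume j: "j \<in> {1..r}"
      show "1 < NB j" unfolding NB_def using \<beta>1[OF j] by (intro one_less_power p1[OF j]) simp
    qed
    show "\<forall>i\<in>{1..v}. \<forall>z. coprime (1 + int (EA i) * z) (int (NA i))"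
      unfolding EA_def NA_def using cop_1pow q_prime tA_rng by blast
    show "\<forall>j\<in>{1..m}. \<forall>z. coprime (1 + int (EB j) * z) (int (NB j))"
    proof (intro ballI allI)
      fix j z assume j: "j \<in> {1..m}"
      then have "j \<in> {1..r}" using mr by auto
      then show "coprime (1 + int (EB j) * z) (int (NB j))"
        unfolding EB_def NB_def using cop_1pow p_prime tB_rng j by blast
    qed
    show "\<forall>x\<in>tup_car {1..m} NB. add_aut {m + 1..r} NB (\<alpha> x)" by (rule \<alpha>_aut)
    show "\<forall>x\<in>tup_car {1..m} NB. \<forall>y\<in>tup_car {1..m} NB. \<forall>z\<in>tup_car {m + 1..r} NB.
       \<alpha> (tup_circ {1..m} NB EB x y) z = \<alpha> x (\<alpha> y z)" by (rule \<alpha>_hom)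
    show "\<forall>i\<in>{1..v}. \<forall>k\<in>{1..v}. i \<noteq> k \<longrightarrow> coprime (NA i) (NA k)"
      unfolding NA_def using q_prime q_inj cop_pp unfolding inj_on_def by metis
    show "\<forall>i\<in>{1..r}. \<forall>k\<in>{1..r}. i \<noteq> k \<longrightarrow> coprime (NB i) (NB k)"
    proof (intro ballI impI)
      fix i k assume ik: "i \<in> {1..r}" "k \<in> {1..r}" "i \<noteq> k"
      have "p i \<noteq> p k" using p_mono ik by (metis less_irrefl nat_neq_iff)
      then show "coprime (NB i) (NB k)" unfolding NB_def using cop_pp p_prime ik by blast
    qed
    show "\<forall>i\<in>{1..v}. \<forall>k\<in>{1..r}. coprime (NA i) (NB k)"
    proof (intro ballI)
      fix i k assume ik: "i \<in> {1..v}" "k \<in> {1..r}"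
      have "q i \<noteq> p k" using qp_disj ik by blast
      then show "coprime (NA i) (NB k)" unfolding NA_def NB_def using cop_pp q_prime p_prime ik by blast
    qed
  qed
  interpret S: setting v m r NA EA NB EB \<alpha> by (rule ST)
  have dA: "q j ^ d j = EA j" if j: "j \<in> {1..v}" for j
  proof -
    have "card (soc1 (NA j) (EA j)) = q j ^ tA j"
      unfolding NA_def EA_def using soc1_card[OF q1[OF j]] tA_rng j by blast
    then show ?thesis using d_def j EA_def by simp
  qed
  have fC: "p j ^ f j = EB j" if j: "j \<in> {1..m}" for j
  proof -
    have jr: "j \<in> {1..r}" using j mr by auto
    have "card (soc1 (NB j) (EB j)) = p j ^ tB j"
      unfolding NB_def EB_def using soc1_card[OF p1[OF jr]] tB_rng j by blast
    then show ?thesis using f_def j EB_def by simp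
  qed
  have g1': "(a, b, c) \<in> br_car v m r NA NB" using g1 unfolding Car_def .
  have g2': "(a', b', c') \<in> br_car v m r NA NB" using g2 unfolding Car_def .
  obtain T1 where T1: "transitive_cycle_base Car add neg br_zero circ T1" "(a, b, c) \<in> T1" using tcb1 by blast
  obtain T2 where T2: "transitive_cycle_base Car add neg br_zero circ T2" "(a', b', c') \<in> T2" using tcb2 by blast
  have T1': "transitive_cycle_base (br_car v m r NA NB) (br_add v m r NA NB) (br_neg v m r NA NB) br_zero
      (br_circ v m r NA EA NB EB \<alpha>) T1" using T1(1) unfolding Car_def add_def neg_def circ_def .
  have T2': "transitive_cycle_base (br_car v m r NA NB) (br_add v m r NA NB) (br_neg v m r NA NB) br_zero
      (br_circ v m r NA EA NB EB \<alpha>) T2" using T2(1) unfolding Car_def add_def neg_def circ_def .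
  show ?thesis
  proof
    assume iso: "cycle_set_iso Car (uc_cycle_op Car add neg br_zero circ (a, b, c))
                           (uc_cycle_op Car add neg br_zero circ (a', b', c'))"
    have R: "(\<forall>j\<in>{1..v}. \<exists>s\<in>soc1 (NA j) (EA j). \<exists>a''\<in>{0..<int (NA j)}.
        a' j = ((1 + s) * (1 + int (EA j) * a'') * a j) mod int (NA j))
     \<and> (\<forall>j\<in>{1..m}. \<exists>s\<in>soc1 (NB j) (EB j). \<exists>a''\<in>{0..<int (NB j)}.
        (\<forall>z\<in>tup_car {m+1..r} NB. \<alpha> (emb j s) z = z) \<and>
        c' j = ((1 + s) * (1 + int (EB j) * a'') * c j) mod int (NB j))"
      by (rule S.forward[OF g1' g2' T1' T1(2)]) (use iso in \<open>simp add: Car_def add_def neg_def circ_def\<close>)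
    show "(\<forall>j\<in>{1..v}. \<exists>s\<in>soc1 (NA j) (EA j). \<exists>a''\<in>{0..<int (NA j)}.
        a' j = ((1 + s) * (1 + int (q j ^ d j) * a'') * a j) mod int (NA j))
     \<and> (\<forall>j\<in>{1..m}. \<exists>s\<in>soc1 (NB j) (EB j). \<exists>a''\<in>{0..<int (NB j)}.
        (\<forall>z\<in>tup_car {m+1..r} NB. \<alpha> (emb j s) z = z) \<and>
        c' j = ((1 + s) * (1 + int (p j ^ f j) * a'') * c j) mod int (NB j))"
      using R dA fC by simp
  next
    assume R: "(\<forall>j\<in>{1..v}. \<exists>s\<in>soc1 (NA j) (EA j). \<exists>a''\<in>{0..<int (NA j)}.
        a' j = ((1 + s) * (1 + int (q j ^ d j) * a'') * a j) mod int (NA j))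
     \<and> (\<forall>j\<in>{1..m}. \<exists>s\<in>soc1 (NB j) (EB j). \<exists>a''\<in>{0..<int (NB j)}.
        (\<forall>z\<in>tup_car {m+1..r} NB. \<alpha> (emb j s) z = z) \<and>
        c' j = ((1 + s) * (1 + int (p j ^ f j) * a'') * c j) mod int (NB j))"
    have HA: "\<forall>j\<in>{1..v}. \<exists>s\<in>soc1 (NA j) (EA j). \<exists>a''\<in>{0..<int (NA j)}.
        a' j = ((1 + s) * (1 + int (EA j) * a'') * a j) mod int (NA j)"
      using R dA by simp
    have HC: "\<forall>j\<in>{1..m}. \<exists>s\<in>soc1 (NB j) (EB j). \<exists>a''\<in>{0..<int (NB j)}.
        (\<forall>z\<in>tup_car {m+1..r} NB. \<alpha> (emb j s) z = z) \<and>
        c' j = ((1 + s) * (1 + int (EB j) * a'') * c j) mod int (NB j)"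
      using R fC by simp
    have "cycle_set_iso (br_car v m r NA NB)
       (uc_cycle_op (br_car v m r NA NB) (br_add v m r NA NB) (br_neg v m r NA NB) br_zero (br_circ v m r NA EA NB EB \<alpha>) (a, b, c))
       (uc_cycle_op (br_car v m r NA NB) (br_add v m r NA NB) (br_neg v m r NA NB) br_zero (br_circ v m r NA EA NB EB \<alpha>) (a', b', c'))"
      by (rule S.backward[OF g1' g2' T1' T1(2) T2' T2(2) HA HC])
    then show "cycle_set_iso Car (uc_cycle_op Car add neg br_zero circ (a, b, c))
                           (uc_cycle_op Car add neg br_zero circ (a', b', c'))"
      unfolding Car_def add_def neg_def circ_def .
  qed
qed

end
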